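(* Let $d_1,d_2\ge1$, $p_{i0}<\cdots<p_{id_i}$ reals, $f_i:\{p_{i0},\dots,p_{id_i}\}\to\mathbb{R}$ ($i=1,2$). Let $\sigma,\tau$, $\psi^\sigma,\psi^\tau$, $N=d_1+d_2$ be as follows: $\sigma_i$ a permutation of $\{0,\dots,d_i\}$ with $f_i(p_{i,\sigma_i(0)})\le\cdots\le f_i(p_{i,\sigma_i(d_i)})$ ($i=1,2$); $\tau_1,\tau_2$ permutations with $f_1(p_{1,\tau_1(0)})\le\cdots\le f_1(p_{1,\tau_1(d_1)})$ and $f_2(p_{2,\tau_2(0)})\ge\cdots\ge f_2(p_{2,\tau_2(d_2)})$; $\psi^\sigma(\boldsymbol{j})=f_1(p_{1,\sigma_1(j_1)})f_2(p_{2,\sigma_2(j_2)})$, $\psi^\tau(\boldsymbol{j})=f_1(p_{1,\tau_1(j_1)})f_2(p_{2,\tau_2(j_2)})$. For $i=1,2$ let $\boldsymbol{\eta}^0_i,\dots,\boldsymbol{\eta}^{d_i}_i$ be distinct vectors in $\{0,1\}^{K_i}$, $K_i=\lceil\log_2(d_i+1)\rceil$, and $A_{ik}=\{t\in\{0,\dots,d_i\}:\eta^t_{ik}=1\}$. Then the set of $(\boldsymbol{x},\boldsymbol{z},\mu,\boldsymbol{\delta})$ satisfying, for $i=1,2$: $\boldsymbol{z}_i\in\Delta^{d_i}$, $\boldsymbol{\delta}_i\in\{0,1\}^{K_i}$, $\sum_{j\in A_{ik}}(z_{ij}-z_{i,j+1})\le\delta_{ik}$ and $\sum_{j\in\{0,\dots,d_i\}\setminus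 A_{ik}}(z_{ij}-z_{i,j+1})\le1-\delta_{ik}$ for $k=1,\dots,K_i$ (with $z_{i0}=1$, $z_{i,d_i+1}=0$), $(x_i,\boldsymbol{z}_i)\in B_i$; together with $\boldsymbol{z}'=(L^\sigma)^{-1}(\boldsymbol{z})$, $\boldsymbol{z}''=(L^\tau)^{-1}(\boldsymbol{z})$ and, for all $\pi\in\Pi$, $$\mu\le\psi^\sigma(\boldsymbol{j}^0)+\sum_{t\in[N]}(\psi^\sigma(\boldsymbol{j}^t)-\psi^\sigma(\boldsymbol{j}^{t-1}))z'_{\pi_t},\qquad\mu\ge\psi^\tau(\boldsymbol{j}^0)+\sum_{t\in[N]}(\psi^\tau(\boldsymbol{j}^t)-\psi^\tau(\boldsymbol{j}^{t-1}))z''_{\pi_t},$$ is an ideal MIP formulation (with binary variables $\boldsymbol{\delta}$ only) of $\{(\boldsymbol{x},\mu):\mu=f_1(x_1)f_2(x_2),\ x_i\in\{p_{i0},\dots,p_{id_i}\},\ i=1,2\}$.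
   Context: $\Delta^d=\{\boldsymbol{z}\in\mathbb{R}^d:1\ge z_1\ge\cdots\ge z_d\ge0\}$; $\boldsymbol{z}=(\boldsymbol{z}_1,\boldsymbol{z}_2)$. $B_i=\{(x_i,\boldsymbol{z}_i):x_i=p_{i0}+\sum_{j\in[d_i]}(p_{ij}-p_{i,j-1})z_{ij},\ \boldsymbol{z}_i\in\Delta^{d_i}\}$. Staircases: $\pi=(\pi_1,\dots,\pi_N)$, $\pi_t=(\pi_t(1),\pi_t(2))$, $\pi_t(1)\in\{1,2\}$ with $i$ occurring exactly $d_i$ times, $\pi_t(2)=|\{s\le t:\pi_s(1)=\pi_t(1)\}|$; $\Pi$ = set of staircases; $z_{\pi_t}=z_{\pi_t(1),\pi_t(2)}$; $\boldsymbol{j}^0=(0,0)$, $\boldsymbol{j}^t=\boldsymbol{j}^{t-1}+\boldsymbol{e}_{\pi_t(1)}$. For permutations $\rho_i$ of $\{0,\dots,d_i\}$: $T_i(\boldsymbol{z}_i)=\boldsymbol{\lambda}_i$ with $\lambda_{ij}=z_{ij}-z_{i,j+1}$, $j=0,\dots,d_i$ ($z_{i0}=1,z_{i,d_i+1}=0$), $T_i^{-1}:z_{ij}=\sum_{k\ge j}\lambda_{ik}$; $P^{\rho_i}$ permutation matrix with $(j,k)$ entry $1$ iff $j=\rho_i(k)$; $L^{\rho_i}=T_i^{-1}\circ P^{\rho_i}\circ T_i$, $L^\rho=(L^{\rho_1},L^{\rho_2})$. An MIP formulation of $S$: polyhedron plus binary restrictions whose projection on original variables is $S$; ideal: every vertex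 of the LP relaxation has the binary-restricted variables binary. *)

theory Defs
  imports "HOL-Analysis.Analysis"
begin

text \<open>Vectors z_i in R^{d_i} are functions nat => real indexed by 1..d_i.
  ext d z adds the conventions z_0 = 1 and z_{d+1} = 0.\<close>
definition ext :: "nat \<Rightarrow> (nat \<Rightarrow> real) \<Rightarrow> nat \<Rightarrow> real" where
  "ext d z j = (if j = 0 then 1 else if j \<le> d then z j else 0)"

definition Delta :: "nat \<Rightarrow> (nat \<Rightarrow> real) set" where
  "Delta d = {z. \<forall>j\<in>{0..d}. ext d z (Suc j) \<le> ext d z j}"

definition inB :: "(nat \<Rightarrow> real) \<Rightarrow> nat \<Rightarrow> real \<Rightarrow> (nat \<Rightarrow> real) \<Rightarrow> bool" where
  "inB p d x z \<longleftrightarrow> z \<in> Delta d \<and> x = p 0 + (\<Sum>j\<in>{1..d}. (p j - p (j - 1)) * z j)"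

definition Tmap :: "nat \<Rightarrow> (nat \<Rightarrow> real) \<Rightarrow> nat \<Rightarrow> real" where
  "Tmap d z = (\<lambda>j. ext d z j - ext d z (Suc j))"

definition Tinv :: "nat \<Rightarrow> (nat \<Rightarrow> real) \<Rightarrow> nat \<Rightarrow> real" where
  "Tinv d lam = (\<lambda>j. \<Sum>k\<in>{j..d}. lam k)"

definition Pperm :: "nat \<Rightarrow> (nat \<Rightarrow> nat) \<Rightarrow> (nat \<Rightarrow> real) \<Rightarrow> nat \<Rightarrow> real" where
  "Pperm d \<rho> lam = (\<lambda>j. \<Sum>k\<in>{0..d}. (if j = \<rho> k then 1 else 0) * lam k)"

definition Lmap :: "nat \<Rightarrow> (nat \<Rightarrow> nat) \<Rightarrow> (nat \<Rightarrow> real) \<Rightarrow> nat \<Rightarrow> real" where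
  "Lmap d \<rho> = Tinv d \<circ> Pperm d \<rho> \<circ> Tmap d"

text \<open>(L^rho)^{-1} = T^{-1} o (P^rho)^{-1} o T, and (P^rho)^{-1} = P^{rho^{-1}}.\<close>
definition Linv :: "nat \<Rightarrow> (nat \<Rightarrow> nat) \<Rightarrow> (nat \<Rightarrow> real) \<Rightarrow> nat \<Rightarrow> real" where
  "Linv d \<rho> = Tinv d \<circ> Pperm d (inv_into {0..d} \<rho>) \<circ> Tmap d"

text \<open>Staircases: lists pi of length N = d1 + d2 of pairs (pi_t(1), pi_t(2));
  list position t (0-based) corresponds to pi_{t+1}.\<close>
definition staircases :: "nat \<Rightarrow> nat \<Rightarrow> (nat \<times> nat) list set" where
  "staircases d1 d2 = {\<pi>. length \<pi> = d1 + d2 \<and>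
     (\<forall>t<length \<pi>. fst (\<pi> ! t) \<in> {1, 2}) \<and>
     card {t. t < length \<pi> \<and> fst (\<pi> ! t) = 1} = d1 \<and>
     card {t. t < length \<pi> \<and> fst (\<pi> ! t) = 2} = d2 \<and>
     (\<forall>t<length \<pi>. snd (\<pi> ! t) = card {s. s \<le> t \<and> fst (\<pi> ! s) = fst (\<pi> ! t)})}"

definition unitv :: "nat \<Rightarrow> nat \<times> nat" where
  "unitv i = (if i = 1 then (1, 0) else (0, 1))"

fun jvec :: "(nat \<times> nat) list \<Rightarrow> nat \<Rightarrow> nat \<times> nat" where
  "jvec \<pi> 0 = (0, 0)"
| "jvec \<pi> (Suc t) = (fst (jvec \<pi> t) + fst (unitv (fst (\<pi> ! t))),
                      snd (jvec \<pi> t) + snd (unitv (fst (\<pi> ! t))))"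

definition psi :: "(real \<Rightarrow> real) \<Rightarrow> (real \<Rightarrow> real) \<Rightarrow> (nat \<Rightarrow> real) \<Rightarrow> (nat \<Rightarrow> real)
    \<Rightarrow> (nat \<Rightarrow> nat) \<Rightarrow> (nat \<Rightarrow> nat) \<Rightarrow> nat \<times> nat \<Rightarrow> real" where
  "psi f1 f2 p1 p2 s1 s2 j = f1 (p1 (s1 (fst j))) * f2 (p2 (s2 (snd j)))"

definition stair_expr :: "(nat \<times> nat \<Rightarrow> real) \<Rightarrow> (nat \<times> nat) list
    \<Rightarrow> (nat \<Rightarrow> real) \<Rightarrow> (nat \<Rightarrow> real) \<Rightarrow> real" where
  "stair_expr \<psi> \<pi> z1 z2 = \<psi> (jvec \<pi> 0) +
     (\<Sum>t\<in>{1..length \<pi>}. (\<psi> (jvec \<pi> t) - \<psi> (jvec \<pi> (t - 1))) *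
        (if fst (\<pi> ! (t - 1)) = 1 then z1 else z2) (snd (\<pi> ! (t - 1))))"

definition Kdim :: "nat \<Rightarrow> nat" where
  "Kdim d = nat \<lceil>log 2 (real d + 1)\<rceil>"

definition Aset :: "(nat \<Rightarrow> nat \<Rightarrow> bool) \<Rightarrow> nat \<Rightarrow> nat \<Rightarrow> nat set" where
  "Aset \<eta> d k = {t\<in>{0..d}. \<eta> t k}"

text \<open>Points (x1, x2, z1, z2, mu, delta1, delta2) of the extended space;
  z_i indexed by 1..d_i and delta_i by 1..K_i, other coordinates fixed to 0.\<close>
type_synonym pt = "real \<times> real \<times> (nat \<Rightarrow> real) \<times> (nat \<Rightarrow> real) \<times> real \<times> (nat \<Rightarrow> real) \<times> (nat \<Rightarrow> real)"

definition block_ok :: "nat \<Rightarrow> (nat \<Rightarrow> real) \<Rightarrow> (nat \<Rightarrow> nat \<Rightarrow> bool) \<Rightarrow> real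
    \<Rightarrow> (nat \<Rightarrow> real) \<Rightarrow> (nat \<Rightarrow> real) \<Rightarrow> bool" where
  "block_ok d p \<eta> x z \<delta> \<longleftrightarrow>
     (\<forall>j. j \<notin> {1..d} \<longrightarrow> z j = 0) \<and> (\<forall>k. k \<notin> {1..Kdim d} \<longrightarrow> \<delta> k = 0) \<and>
     z \<in> Delta d \<and>
     (\<forall>k\<in>{1..Kdim d}. 0 \<le> \<delta> k \<and> \<delta> k \<le> 1 \<and>
        (\<Sum>j\<in>Aset \<eta> d k. Tmap d z j) \<le> \<delta> k \<and>
        (\<Sum>j\<in>{0..d} - Aset \<eta> d k. Tmap d z j) \<le> 1 - \<delta> k) \<and>
     inB p d x z"

definition relaxation ::
  "nat \<Rightarrow> nat \<Rightarrow> (nat \<Rightarrow> real) \<Rightarrow> (nat \<Rightarrow> real) \<Rightarrow> (real \<Rightarrow> real) \<Rightarrow> (real \<Rightarrow> real)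
   \<Rightarrow> (nat \<Rightarrow> nat) \<Rightarrow> (nat \<Rightarrow> nat) \<Rightarrow> (nat \<Rightarrow> nat) \<Rightarrow> (nat \<Rightarrow> nat)
   \<Rightarrow> (nat \<Rightarrow> nat \<Rightarrow> bool) \<Rightarrow> (nat \<Rightarrow> nat \<Rightarrow> bool) \<Rightarrow> pt set" where
  "relaxation d1 d2 p1 p2 f1 f2 \<sigma>1 \<sigma>2 \<tau>1 \<tau>2 \<eta>1 \<eta>2 =
    {(x1, x2, z1, z2, \<mu>, \<delta>1, \<delta>2).
       block_ok d1 p1 \<eta>1 x1 z1 \<delta>1 \<and> block_ok d2 p2 \<eta>2 x2 z2 \<delta>2 \<and>
       (\<forall>\<pi>\<in>staircases d1 d2.
          \<mu> \<le> stair_expr (psi f1 f2 p1 p2 \<sigma>1 \<sigma>2) \<pi> (Linv d1 \<sigma>1 z1) (Linv d2 \<sigma>2 z2) \<and>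
          \<mu> \<ge> stair_expr (psi f1 f2 p1 p2 \<tau>1 \<tau>2) \<pi> (Linv d1 \<tau>1 z1) (Linv d2 \<tau>2 z2))}"

definition binary_ok :: "nat \<Rightarrow> nat \<Rightarrow> pt \<Rightarrow> bool" where
  "binary_ok d1 d2 w = (case w of (x1, x2, z1, z2, \<mu>, \<delta>1, \<delta>2) \<Rightarrow>
     (\<forall>k\<in>{1..Kdim d1}. \<delta>1 k \<in> {0, 1}) \<and> (\<forall>k\<in>{1..Kdim d2}. \<delta>2 k \<in> {0, 1}))"

definition proj_xmu :: "pt \<Rightarrow> real \<times> real \<times> real" where
  "proj_xmu w = (case w of (x1, x2, z1, z2, \<mu>, \<delta>1, \<delta>2) \<Rightarrow> (x1, x2, \<mu>))"

definition fcomb :: "real \<Rightarrow> (nat \<Rightarrow> real) \<Rightarrow> (nat \<Rightarrow> real) \<Rightarrow> nat \<Rightarrow> real" where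
  "fcomb u a b = (\<lambda>k. (1 - u) * a k + u * b k)"

definition pcomb :: "real \<Rightarrow> pt \<Rightarrow> pt \<Rightarrow> pt" where
  "pcomb u a b = (case a of (x1, x2, z1, z2, \<mu>, \<delta>1, \<delta>2) \<Rightarrow>
                  case b of (x1', x2', z1', z2', \<mu>', \<delta>1', \<delta>2') \<Rightarrow>
     ((1 - u) * x1 + u * x1', (1 - u) * x2 + u * x2', fcomb u z1 z1', fcomb u z2 z2',
      (1 - u) * \<mu> + u * \<mu>', fcomb u \<delta>1 \<delta>1', fcomb u \<delta>2 \<delta>2'))"

definition vertex_of :: "pt \<Rightarrow> pt set \<Rightarrow> bool" where
  "vertex_of v Q \<longleftrightarrow> v \<in> Q \<and>
     \<not> (\<exists>a\<in>Q. \<exists>b\<in>Q. a \<noteq> b \<and> (\<exists>u. 0 < u \<and> u < 1 \<and> v = pcomb u a b))"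

definition ideal_MIP_formulation ::
  "pt set \<Rightarrow> (pt \<Rightarrow> bool) \<Rightarrow> (pt \<Rightarrow> 'b) \<Rightarrow> 'b set \<Rightarrow> bool" where
  "ideal_MIP_formulation Q bin proj S \<longleftrightarrow>
     proj ` {w \<in> Q. bin w} = S \<and> (\<forall>v. vertex_of v Q \<longrightarrow> bin v)"

end

theory Submission
  imports Defs
begin



lemma tele: "m \<le> Suc n \<Longrightarrow> (\<Sum>i = m..n. (f::nat\<Rightarrow>real) i - f (Suc i)) = f m - f (Suc n)"
  using sum_Suc_diff[of m n "\<lambda>i. - f i"] by simp

lemma ext_0[simp]: "ext d z 0 = 1" and ext_Sucd[simp]: "ext d z (Suc d) = 0"
  by (auto simp: ext_def)

lemma Tmap_sum: "(\<Sum>j\<in>{0..d}. Tmap d z j) = 1"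
  unfolding Tmap_def using tele[of 0 d "ext d z"] by simp

lemma z_from_Tmap: "j \<in> {1..d} \<Longrightarrow> z j = (\<Sum>k\<in>{j..d}. Tmap d z k)"
  unfolding Tmap_def using tele[of j d "ext d z"] by (simp add: ext_def)

lemma Tmap_nonneg: "z \<in> Delta d \<Longrightarrow> j \<in> {0..d} \<Longrightarrow> 0 \<le> Tmap d z j"
  unfolding Tmap_def Delta_def by auto

lemma Pperm_inv:
  assumes "bij_betw \<rho> {0..d} {0..d}" "j \<in> {0..d}"
  shows "Pperm d (inv_into {0..d} \<rho>) lam j = lam (\<rho> j)"
proof -
  have "Pperm d (inv_into {0..d} \<rho>) lam j = (\<Sum>k\<in>{0..d}. (if k = \<rho> j then lam k else 0))"
    unfolding Pperm_def
  proof (rule sum.cong)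
    fix k assume k: "k \<in> {0..d}"
    have "(j = inv_into {0..d} \<rho> k) = (k = \<rho> j)"
      using assms k by (metis bij_betw_inv_into_left bij_betw_inv_into_right)
    then show "(if j = inv_into {0..d} \<rho> k then 1 else 0) * lam k = (if k = \<rho> j then lam k else 0)"
      by simp
  qed simp
  also have "\<dots> = lam (\<rho> j)"
    using assms bij_betw_apply by (fastforce simp add: sum.delta')
  finally show ?thesis .
qed

lemma Linv_eq:
  assumes "bij_betw \<rho> {0..d} {0..d}"
  shows "Linv d \<rho> z j = (\<Sum>k\<in>{j..d}. Tmap d z (\<rho> k))"
  unfolding Linv_def Tinv_def comp_def
  by (rule sum.cong) (auto simp: Pperm_inv[OF assms])




definition vz :: "nat \<Rightarrow> nat \<Rightarrow> real" where
  "vz t = (\<lambda>j. if 1 \<le> j \<and> j \<le> t then 1 else 0)"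
definition vd :: "(nat \<Rightarrow> nat \<Rightarrow> bool) \<Rightarrow> nat \<Rightarrow> nat \<Rightarrow> nat \<Rightarrow> real" where
  "vd \<eta> d t = (\<lambda>k. if k \<in> {1..Kdim d} \<and> \<eta> t k then 1 else 0)"

lemma ptele: assumes "s \<le> d" shows "p 0 + (\<Sum>j\<in>{1..d}. (p j - p (j - 1)) * vz s j) = (p s :: real)"
proof -
  have "(\<Sum>j\<in>{1..d}. (p j - p (j - 1)) * vz s j) = (\<Sum>j\<in>{1..s}. (p j - p (j - 1)))"
    using assms by (intro sum.mono_neutral_cong_right) (auto simp: vz_def)
  also have "\<dots> = p s - p 0" using sum_telescope''[of 0 s p] by simp
  finally show ?thesis by simp
qed

lemma block_basic:
  assumes "block_ok d p \<eta> x z \<delta>"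
  shows "\<And>k. k \<in> {0..d} \<Longrightarrow> 0 \<le> Tmap d z k"
    and "\<And>j. j \<notin> {1..d} \<Longrightarrow> z j = 0"
    and "\<And>k. k \<notin> {1..Kdim d} \<Longrightarrow> \<delta> k = 0"
    and "\<And>k. k \<in> {1..Kdim d} \<Longrightarrow> \<delta> k = (\<Sum>j\<in>Aset \<eta> d k. Tmap d z j)"
    and "z \<in> Delta d"
    and "x = p 0 + (\<Sum>j\<in>{1..d}. (p j - p (j - 1)) * z j)"
proof -
  show "\<And>k. k \<in> {0..d} \<Longrightarrow> 0 \<le> Tmap d z k" using assms Tmap_nonneg unfolding block_ok_def by blast
  show "\<And>j. j \<notin> {1..d} \<Longrightarrow> z j = 0" "\<And>k. k \<notin> {1..Kdim d} \<Longrightarrow> \<delta> k = 0" "z \<in> Delta d"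
    using assms unfolding block_ok_def by auto
  show "x = p 0 + (\<Sum>j\<in>{1..d}. (p j - p (j - 1)) * z j)" using assms unfolding block_ok_def inB_def by auto
  fix k assume k: "k \<in> {1..Kdim d}"
  have A: "Aset \<eta> d k \<subseteq> {0..d}" by (auto simp: Aset_def)
  have "(\<Sum>j\<in>Aset \<eta> d k. Tmap d z j) + (\<Sum>j\<in>{0..d} - Aset \<eta> d k. Tmap d z j) = 1"
    using Tmap_sum[of d z] sum.subset_diff[OF A, of "Tmap d z"] by simp
  then show "\<delta> k = (\<Sum>j\<in>Aset \<eta> d k. Tmap d z j)" using assms k unfolding block_ok_def by force
qed

lemma sum_ind_le:
  assumes "s \<le> (d::nat)"
  shows "(\<Sum>k\<in>{j..d}. (if s = k then 1 else 0::real)) = (if j \<le> s then 1 else 0)"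
  using assms by (simp add: sum.delta)

lemma block_rep:
  assumes B: "block_ok d p \<eta> x z \<delta>" and I: "finite I" and w1: "(\<Sum>t\<in>I. w t) = 1"
    and s: "\<forall>t\<in>I. s t \<in> {0..d}"
    and lam: "\<forall>k\<in>{0..d}. Tmap d z k = (\<Sum>t\<in>I. w t * (if s t = k then 1 else 0))"
  shows "z = (\<lambda>j. \<Sum>t\<in>I. w t * vz (s t) j)"
    and "x = (\<Sum>t\<in>I. w t * p (s t))"
    and "\<delta> = (\<lambda>k. \<Sum>t\<in>I. w t * vd \<eta> d (s t) k)"
proof -
  note bb = block_basic[OF B]
  show zeq: "z = (\<lambda>j. \<Sum>t\<in>I. w t * vz (s t) j)"
  proof
    fix j
    show "z j = (\<Sum>t\<in>I. w t * vz (s t) j)"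
    proof (cases "j \<in> {1..d}")
      case True
      have "z j = (\<Sum>k\<in>{j..d}. Tmap d z k)" using z_from_Tmap[OF True] .
      also have "\<dots> = (\<Sum>k\<in>{j..d}. \<Sum>t\<in>I. w t * (if s t = k then 1 else 0))"
        using lam True by (intro sum.cong) auto
      also have "\<dots> = (\<Sum>t\<in>I. w t * (\<Sum>k\<in>{j..d}. (if s t = k then 1 else 0)))"
        by (simp only: sum_distrib_left) (rule sum.swap)
      also have "\<dots> = (\<Sum>t\<in>I. w t * vz (s t) j)"
        using s True by (intro sum.cong refl) (auto simp: sum_ind_le vz_def)
      finally show ?thesis .
    next
      case False
      then have "vz (s t) j = 0" if "t \<in> I" for t using s that by (auto simp: vz_def)
      then show ?thesis using bb(2)[OF False] by simp
    qed
  qed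
  have "x = p 0 + (\<Sum>j\<in>{1..d}. (p j - p (j - 1)) * (\<Sum>t\<in>I. w t * vz (s t) j))"
    using bb(6) zeq by simp
  also have "\<dots> = (\<Sum>t\<in>I. w t * (p 0 + (\<Sum>j\<in>{1..d}. (p j - p (j - 1)) * vz (s t) j)))"
  proof -
    have e1: "(\<Sum>t\<in>I. w t * p 0) = p 0" using w1 by (simp flip: sum_distrib_right)
    have e2: "(\<Sum>j\<in>{1..d}. (p j - p (j - 1)) * (\<Sum>t\<in>I. w t * vz (s t) j))
        = (\<Sum>t\<in>I. w t * (\<Sum>j\<in>{1..d}. (p j - p (j - 1)) * vz (s t) j))"
      by (simp add: sum_distrib_left mult.left_commute) (rule sum.swap)
    show ?thesis using e1 e2 by (simp add: distrib_left sum.distrib)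
  qed
  also have "\<dots> = (\<Sum>t\<in>I. w t * p (s t))"
    using s by (intro sum.cong refl) (metis atLeastAtMost_iff ptele)
  finally show "x = (\<Sum>t\<in>I. w t * p (s t))" .
  show "\<delta> = (\<lambda>k. \<Sum>t\<in>I. w t * vd \<eta> d (s t) k)"
  proof
    fix k
    show "\<delta> k = (\<Sum>t\<in>I. w t * vd \<eta> d (s t) k)"
    proof (cases "k \<in> {1..Kdim d}")
      case True
      have "\<delta> k = (\<Sum>j\<in>Aset \<eta> d k. Tmap d z j)" using bb(4)[OF True] .
      also have "\<dots> = (\<Sum>j\<in>Aset \<eta> d k. \<Sum>t\<in>I. w t * (if s t = j then 1 else 0))"
        using lam by (intro sum.cong) (auto simp: Aset_def)
      also have "\<dots> = (\<Sum>t\<in>I. w t * (\<Sum>j\<in>Aset \<eta> d k. (if s t = j then 1 else 0)))"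
        by (simp only: sum_distrib_left) (rule sum.swap)
      also have "\<dots> = (\<Sum>t\<in>I. w t * vd \<eta> d (s t) k)"
        using s True by (intro sum.cong refl) (auto simp: vd_def Aset_def sum.delta)
      finally show ?thesis .
    next
      case False
      then show ?thesis using bb(3)[OF False] by (auto simp: vd_def)
    qed
  qed
qed




lemma jvec_append: "t \<le> length \<pi> \<Longrightarrow> jvec (\<pi> @ xs) t = jvec \<pi> t"
  by (induction t) (auto simp: nth_append)

lemma card_less_Suc: "card {s. s < Suc t \<and> P s} = card {s. s < t \<and> P s} + (if P t then 1 else 0)"
proof -
  have "{s. s < Suc t \<and> P s} = {s. s < t \<and> P s} \<union> (if P t then {t} else {})"
    by (auto simp: less_Suc_eq)
  then show ?thesis by (auto simp: card_insert_if)
qed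

lemma jvec_card:
  assumes "\<forall>s<length \<pi>. fst (\<pi> ! s) \<in> {1,2}" "t \<le> length \<pi>"
  shows "jvec \<pi> t = (card {s. s < t \<and> fst (\<pi> ! s) = 1}, card {s. s < t \<and> fst (\<pi> ! s) = 2})"
  using assms(2)
proof (induction t)
  case 0 then show ?case by simp
next
  case (Suc t)
  then have "fst (\<pi> ! t) \<in> {1,2}" using assms(1) by auto
  then show ?case using Suc by (auto simp: card_less_Suc unitv_def)
qed

lemma stair_basic:
  assumes "\<pi> \<in> staircases d1 d2"
  shows "length \<pi> = d1 + d2" "\<forall>s<length \<pi>. fst (\<pi> ! s) \<in> {1,2}"
    and "jvec \<pi> (d1 + d2) = (d1, d2)"
    and "\<And>t. t \<le> d1 + d2 \<Longrightarrow> fst (jvec \<pi> t) \<le> d1 \<and> snd (jvec \<pi> t) \<le> d2"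
    and "\<And>t. t < d1 + d2 \<Longrightarrow> fst (\<pi> ! t) = 1 \<Longrightarrow> snd (\<pi> ! t) = Suc (fst (jvec \<pi> t)) \<and> jvec \<pi> (Suc t) = (Suc (fst (jvec \<pi> t)), snd (jvec \<pi> t))"
    and "\<And>t. t < d1 + d2 \<Longrightarrow> fst (\<pi> ! t) \<noteq> 1 \<Longrightarrow> snd (\<pi> ! t) = Suc (snd (jvec \<pi> t)) \<and> jvec \<pi> (Suc t) = (fst (jvec \<pi> t), Suc (snd (jvec \<pi> t)))"
proof -
  note S = assms[unfolded staircases_def, simplified]
  show L: "length \<pi> = d1 + d2" "\<forall>s<length \<pi>. fst (\<pi> ! s) \<in> {1,2}" using S by auto
  show "jvec \<pi> (d1 + d2) = (d1, d2)" using S jvec_card[OF L(2)] L(1) by simp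
  show "fst (jvec \<pi> t) \<le> d1 \<and> snd (jvec \<pi> t) \<le> d2" if t: "t \<le> d1 + d2" for t
  proof -
    have "card {s. s < t \<and> fst (\<pi> ! s) = 1} \<le> card {s. s < length \<pi> \<and> fst (\<pi> ! s) = 1}"
      using t L by (intro card_mono) auto
    moreover have "card {s. s < t \<and> fst (\<pi> ! s) = 2} \<le> card {s. s < length \<pi> \<and> fst (\<pi> ! s) = 2}"
      using t L by (intro card_mono) auto
    ultimately show ?thesis using S jvec_card[OF L(2), of t] t L by simp
  qed
  have sndc: "snd (\<pi> ! t) = card {s. s < Suc t \<and> fst (\<pi> ! s) = fst (\<pi> ! t)}" if "t < d1 + d2" for t
  proof -
    have "{s. s \<le> t \<and> fst (\<pi> ! s) = fst (\<pi> ! t)} = {s. s < Suc t \<and> fst (\<pi> ! s) = fst (\<pi> ! t)}" by auto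
    then show ?thesis using S that by auto
  qed
  show "snd (\<pi> ! t) = Suc (fst (jvec \<pi> t)) \<and> jvec \<pi> (Suc t) = (Suc (fst (jvec \<pi> t)), snd (jvec \<pi> t))"
    if "t < d1 + d2" "fst (\<pi> ! t) = 1" for t
    using that sndc[OF that(1)] jvec_card[OF L(2), of t] L by (simp add: card_less_Suc unitv_def)
  show "snd (\<pi> ! t) = Suc (snd (jvec \<pi> t)) \<and> jvec \<pi> (Suc t) = (fst (jvec \<pi> t), Suc (snd (jvec \<pi> t)))"
    if "t < d1 + d2" "fst (\<pi> ! t) \<noteq> 1" for t
  proof -
    have "fst (\<pi> ! t) = 2" using that L by auto
    then show ?thesis
      using that sndc[OF that(1)] jvec_card[OF L(2), of t] L by (simp add: card_less_Suc unitv_def)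
  qed
qed

lemma stair_append:
  assumes "\<pi> \<in> staircases d1 d2"
  shows "\<pi> @ [(1, Suc d1)] \<in> staircases (Suc d1) d2" (is ?A)
    and "\<pi> @ [(2, Suc d2)] \<in> staircases d1 (Suc d2)" (is ?B)
proof -
  note S = assms[unfolded staircases_def, simplified]
  have L: "length \<pi> = d1 + d2" using S by auto
  have c1: "card {t. t < length \<pi> \<and> fst (\<pi> ! t) = 1} = d1"
    and c2: "card {t. t < length \<pi> \<and> fst (\<pi> ! t) = 2} = d2" using S by auto
  have cc: "{s. s < t \<and> P ((\<pi> @ xs) ! s)} = {s. s < t \<and> P (\<pi> ! s)}" if "t \<le> length \<pi>" for t P xs
    using that by (auto simp: nth_append)
  have cc2: "{s. s \<le> t \<and> P ((\<pi> @ xs) ! s)} = {s. s \<le> t \<and> P (\<pi> ! s)}" if "t < length \<pi>" for t P xs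
    using that by (auto simp: nth_append)
  have cc3: "{s. s \<le> t \<and> P s} = {s. s < Suc t \<and> P s}" for t P by auto
  show ?A
    unfolding staircases_def
  proof (intro CollectI conjI allI impI)
    let ?p = "\<pi> @ [(1, Suc d1)]"
    show "length ?p = Suc d1 + d2" using L by simp
    show "fst (?p ! t) \<in> {1, 2}" if "t < length ?p" for t
      using that S by (auto simp: nth_append less_Suc_eq)
    show "card {t. t < length ?p \<and> fst (?p ! t) = 1} = Suc d1"
      using c1 c2 cc[of "length \<pi>" "\<lambda>x. fst x = 1" "[(1, Suc d1)]"] by (simp add: card_less_Suc)
    show "card {t. t < length ?p \<and> fst (?p ! t) = 2} = d2"
      using c1 c2 cc[of "length \<pi>" "\<lambda>x. fst x = 2" "[(1, Suc d1)]"] by (simp add: card_less_Suc)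
    show "snd (?p ! t) = card {s. s \<le> t \<and> fst (?p ! s) = fst (?p ! t)}" if "t < length ?p" for t
    proof (cases "t < length \<pi>")
      case True
      then show ?thesis using S cc2[OF True, of "\<lambda>x. fst x = fst (\<pi> ! t)" "[(1, Suc d1)]"]
        by (simp add: nth_append)
    next
      case False
      then have "t = length \<pi>" using that by simp
      then show ?thesis using c1 cc3 cc[of "length \<pi>" "\<lambda>x. fst x = 1" "[(1, Suc d1)]"]
        by (simp add: card_less_Suc)
    qed
  qed
  show ?B
    unfolding staircases_def
  proof (intro CollectI conjI allI impI)
    let ?p = "\<pi> @ [(2, Suc d2)]"
    show "length ?p = d1 + Suc d2" using L by simp
    show "fst (?p ! t) \<in> {1, 2}" if "t < length ?p" for t
      using that S by (auto simp: nth_append less_Suc_eq)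
    show "card {t. t < length ?p \<and> fst (?p ! t) = 1} = d1"
      using c1 c2 cc[of "length \<pi>" "\<lambda>x. fst x = 1" "[(2, Suc d2)]"] by (simp add: card_less_Suc)
    show "card {t. t < length ?p \<and> fst (?p ! t) = 2} = Suc d2"
      using c1 c2 cc[of "length \<pi>" "\<lambda>x. fst x = 2" "[(2, Suc d2)]"] by (simp add: card_less_Suc)
    show "snd (?p ! t) = card {s. s \<le> t \<and> fst (?p ! s) = fst (?p ! t)}" if "t < length ?p" for t
    proof (cases "t < length \<pi>")
      case True
      then show ?thesis using S cc2[OF True, of "\<lambda>x. fst x = fst (\<pi> ! t)" "[(2, Suc d2)]"]
        by (simp add: nth_append)
    next
      case False
      then have "t = length \<pi>" using that by simp
      then show ?thesis using c2 cc3 cc[of "length \<pi>" "\<lambda>x. fst x = 2" "[(2, Suc d2)]"]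
        by (simp add: card_less_Suc)
    qed
  qed
qed

lemma stair_expr_append:
  "stair_expr \<psi> (\<pi> @ [x]) a b = stair_expr \<psi> \<pi> a b +
     (\<psi> (jvec (\<pi> @ [x]) (Suc (length \<pi>))) - \<psi> (jvec \<pi> (length \<pi>))) *
       (if fst x = 1 then a else b) (snd x)"
proof -
  have "(\<Sum>t\<in>{1..length \<pi>}. (\<psi> (jvec (\<pi> @ [x]) t) - \<psi> (jvec (\<pi> @ [x]) (t - 1))) *
        (if fst ((\<pi> @ [x]) ! (t - 1)) = 1 then a else b) (snd ((\<pi> @ [x]) ! (t - 1))))
      = (\<Sum>t\<in>{1..length \<pi>}. (\<psi> (jvec \<pi> t) - \<psi> (jvec \<pi> (t - 1))) *
        (if fst (\<pi> ! (t - 1)) = 1 then a else b) (snd (\<pi> ! (t - 1))))"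
    by (intro sum.cong refl) (auto simp: jvec_append nth_append)
  then show ?thesis unfolding stair_expr_def
    by (simp add: jvec_append nth_append)
qed




definition decr :: "nat \<Rightarrow> (nat \<Rightarrow> real) \<Rightarrow> bool" where
  "decr d a \<longleftrightarrow> (\<forall>j. 1 \<le> j \<and> j \<le> d \<longrightarrow> 0 \<le> a j \<and> a j \<le> 1) \<and> (\<forall>j. 1 \<le> j \<and> j < d \<longrightarrow> a (Suc j) \<le> a j)"

lemma ext_self: "ext d a d = (if d = 0 then 1 else a d)" by (simp add: ext_def)

lemma sum_split_last:
  fixes w' g :: "nat \<Rightarrow> real"
  shows "(\<Sum>t\<le>Suc n. (if t < n then w' t else if t = n then w' n - c else c) * g t)
       = (\<Sum>t\<le>n. w' t * g t) + c * (g (Suc n) - g n)"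
proof -
  have "(\<Sum>t<n. (if t < n then w' t else if t = n then w' n - c else c) * g t) = (\<Sum>t<n. w' t * g t)"
    by (intro sum.cong) auto
  then show ?thesis
    by (simp add: lessThan_Suc_atMost[symmetric] algebra_simps)
qed

lemma chain:
  assumes "decr d1 a" "decr d2 b"
  shows "\<exists>\<pi> w. \<pi> \<in> staircases d1 d2 \<and> (\<forall>t\<le>d1+d2. 0 \<le> w t) \<and> (\<Sum>t\<le>d1+d2. w t) = 1 \<and>
     (\<forall>j\<in>{1..d1}. a j = (\<Sum>t\<le>d1+d2. w t * (if j \<le> fst (jvec \<pi> t) then 1 else 0))) \<and>
     (\<forall>j\<in>{1..d2}. b j = (\<Sum>t\<le>d1+d2. w t * (if j \<le> snd (jvec \<pi> t) then 1 else 0))) \<and>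
     (\<forall>\<psi>. stair_expr \<psi> \<pi> a b = (\<Sum>t\<le>d1+d2. w t * \<psi> (jvec \<pi> t))) \<and>
     w (d1+d2) = min (ext d1 a d1) (ext d2 b d2)"
  using assms
proof (induction "d1+d2" arbitrary: d1 d2)
  case 0
  then have "d1 = 0" "d2 = 0" by auto
  then show ?case
    by (intro exI[of _ "[]"] exI[of _ "\<lambda>_. 1"]) (simp add: staircases_def stair_expr_def ext_def)
next
  case (Suc n)
  show ?case
  proof (cases "d1 \<ge> 1 \<and> (d2 = 0 \<or> a d1 \<le> b d2)")
    case True
    then obtain e where e: "d1 = Suc e" by (cases d1) auto
    have ne: "n = e + d2" using Suc e by simp
    have de: "decr e a" using Suc.prems(1) e by (auto simp: decr_def)
    obtain \<pi>' w' where \<pi>': "\<pi>' \<in> staircases e d2" and w'0: "\<forall>t\<le>e+d2. 0 \<le> w' t"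
      and w'1: "(\<Sum>t\<le>e+d2. w' t) = 1"
      and wa: "\<forall>j\<in>{1..e}. a j = (\<Sum>t\<le>e+d2. w' t * (if j \<le> fst (jvec \<pi>' t) then 1 else 0))"
      and wb: "\<forall>j\<in>{1..d2}. b j = (\<Sum>t\<le>e+d2. w' t * (if j \<le> snd (jvec \<pi>' t) then 1 else 0))"
      and wpsi: "\<forall>\<psi>. stair_expr \<psi> \<pi>' a b = (\<Sum>t\<le>e+d2. w' t * \<psi> (jvec \<pi>' t))"
      and wl: "w' (e+d2) = min (ext e a e) (ext d2 b d2)"
      using Suc.hyps(1)[OF ne de Suc.prems(2)] by blast
    define c where "c = a (Suc e)"
    define \<pi> where "\<pi> = \<pi>' @ [(1, Suc e)]"
    define w where "w = (\<lambda>t. if t < n then w' t else if t = n then w' n - c else c)"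
    have len: "length \<pi>' = n" using stair_basic(1)[OF \<pi>'] ne by simp
    have \<pi>s: "\<pi> \<in> staircases d1 d2" unfolding \<pi>_def e by (rule stair_append(1)[OF \<pi>'])
    have jv: "jvec \<pi> t = jvec \<pi>' t" if "t \<le> n" for t using that len by (simp add: \<pi>_def jvec_append)
    have jvn: "jvec \<pi>' n = (e, d2)" using stair_basic(3)[OF \<pi>'] ne by simp
    have jvSn: "jvec \<pi> (Suc n) = (Suc e, d2)" using stair_basic(3)[OF \<pi>s] e Suc.hyps(2) by simp
    have bnd: "fst (jvec \<pi>' t) \<le> e \<and> snd (jvec \<pi>' t) \<le> d2" if "t \<le> n" for t
      using stair_basic(4)[OF \<pi>'] that ne by simp
    have ca: "0 \<le> c \<and> c \<le> 1" using Suc.prems(1) e by (simp add: decr_def c_def)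
    have cle: "c \<le> w' n"
    proof -
      have "c \<le> ext e a e" using Suc.prems(1) e by (auto simp: decr_def c_def ext_self)
      moreover have "c \<le> ext d2 b d2" using True e ca by (auto simp: c_def ext_self)
      ultimately show ?thesis using wl ne by simp
    qed
    have SL: "(\<Sum>t\<le>Suc n. w t * g t) = (\<Sum>t\<le>n. w' t * g t) + c * (g (Suc n) - g n)" for g
      unfolding w_def by (rule sum_split_last)
    have tot: "d1 + d2 = Suc n" using Suc.hyps(2) by simp
    show ?thesis
      unfolding tot
    proof (intro exI[of _ \<pi>] exI[of _ w] conjI allI impI ballI)
      show "\<pi> \<in> staircases d1 d2" by (rule \<pi>s)
      show "0 \<le> w t" if "t \<le> Suc n" for t using w'0 ne cle ca that by (auto simp: w_def)
      show "(\<Sum>t\<le>Suc n. w t) = 1" using SL[of "\<lambda>_. 1"] w'1 ne by simp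
      show "w (Suc n) = min (ext d1 a d1) (ext d2 b d2)"
        using True e ca by (auto simp: w_def c_def ext_self)
      show "a j = (\<Sum>t\<le>Suc n. w t * (if j \<le> fst (jvec \<pi> t) then 1 else 0))" if j: "j \<in> {1..d1}" for j
      proof (cases "j \<le> e")
        case True
        have "(\<Sum>t\<le>n. w' t * (if j \<le> fst (jvec \<pi> t) then 1 else 0))
            = (\<Sum>t\<le>n. w' t * (if j \<le> fst (jvec \<pi>' t) then 1 else 0))"
          using jv by (intro sum.cong) auto
        then show ?thesis using SL[of "\<lambda>t. if j \<le> fst (jvec \<pi> t) then 1 else 0"] wa True j jv[of n] jvn jvSn ne
          by simp
      next
        case False
        then have jj: "j = Suc e" using j e by simp
        have "(\<Sum>t\<le>n. w' t * (if j \<le> fst (jvec \<pi> t) then 1 else 0)) = 0"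
        proof (intro sum.neutral ballI)
          fix t assume "t \<in> {..n}"
          then show "w' t * (if j \<le> fst (jvec \<pi> t) then 1 else 0) = 0"
            using jv[of t] bnd[of t] jj by auto
        qed
        then show ?thesis using SL[of "\<lambda>t. if j \<le> fst (jvec \<pi> t) then 1 else 0"] jj jv[of n] jvn jvSn
          by (simp add: c_def)
      qed
      show "b j = (\<Sum>t\<le>Suc n. w t * (if j \<le> snd (jvec \<pi> t) then 1 else 0))" if j: "j \<in> {1..d2}" for j
      proof -
        have "(\<Sum>t\<le>n. w' t * (if j \<le> snd (jvec \<pi> t) then 1 else 0))
            = (\<Sum>t\<le>n. w' t * (if j \<le> snd (jvec \<pi>' t) then 1 else 0))"
          using jv by (intro sum.cong) auto
        then show ?thesis using SL[of "\<lambda>t. if j \<le> snd (jvec \<pi> t) then 1 else 0"] wb j jv[of n] jvn jvSn ne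
          by simp
      qed
      fix \<psi>
      have "(\<Sum>t\<le>n. w' t * \<psi> (jvec \<pi> t)) = (\<Sum>t\<le>n. w' t * \<psi> (jvec \<pi>' t))"
        using jv by (intro sum.cong) auto
      moreover have "stair_expr \<psi> \<pi> a b = stair_expr \<psi> \<pi>' a b + (\<psi> (jvec \<pi> (Suc n)) - \<psi> (jvec \<pi>' n)) * c"
        unfolding \<pi>_def using stair_expr_append[of \<psi> \<pi>' "(1, Suc e)" a b] len by (simp add: c_def)
      ultimately show "stair_expr \<psi> \<pi> a b = (\<Sum>t\<le>Suc n. w t * \<psi> (jvec \<pi> t))"
        using SL[of "\<lambda>t. \<psi> (jvec \<pi> t)"] wpsi ne jv[of n] by (simp add: algebra_simps)
    qed
  next
    case False
    have d2: "d2 \<noteq> 0" using False Suc.hyps(2) by auto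
    then obtain e where e: "d2 = Suc e" by (cases d2) auto
    have ne: "n = d1 + e" using Suc e by simp
    have de: "decr e b" using Suc.prems(2) e by (auto simp: decr_def)
    obtain \<pi>' w' where \<pi>': "\<pi>' \<in> staircases d1 e" and w'0: "\<forall>t\<le>d1+e. 0 \<le> w' t"
      and w'1: "(\<Sum>t\<le>d1+e. w' t) = 1"
      and wa: "\<forall>j\<in>{1..d1}. a j = (\<Sum>t\<le>d1+e. w' t * (if j \<le> fst (jvec \<pi>' t) then 1 else 0))"
      and wb: "\<forall>j\<in>{1..e}. b j = (\<Sum>t\<le>d1+e. w' t * (if j \<le> snd (jvec \<pi>' t) then 1 else 0))"
      and wpsi: "\<forall>\<psi>. stair_expr \<psi> \<pi>' a b = (\<Sum>t\<le>d1+e. w' t * \<psi> (jvec \<pi>' t))"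
      and wl: "w' (d1+e) = min (ext d1 a d1) (ext e b e)"
      using Suc.hyps(1)[OF ne Suc.prems(1) de] by blast
    define c where "c = b (Suc e)"
    define \<pi> where "\<pi> = \<pi>' @ [(2, Suc e)]"
    define w where "w = (\<lambda>t. if t < n then w' t else if t = n then w' n - c else c)"
    have len: "length \<pi>' = n" using stair_basic(1)[OF \<pi>'] ne by simp
    have \<pi>s: "\<pi> \<in> staircases d1 d2" unfolding \<pi>_def e by (rule stair_append(2)[OF \<pi>'])
    have jv: "jvec \<pi> t = jvec \<pi>' t" if "t \<le> n" for t using that len by (simp add: \<pi>_def jvec_append)
    have jvn: "jvec \<pi>' n = (d1, e)" using stair_basic(3)[OF \<pi>'] ne by simp
    have jvSn: "jvec \<pi> (Suc n) = (d1, Suc e)" using stair_basic(3)[OF \<pi>s] e Suc.hyps(2) by simp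
    have bnd: "fst (jvec \<pi>' t) \<le> d1 \<and> snd (jvec \<pi>' t) \<le> e" if "t \<le> n" for t
      using stair_basic(4)[OF \<pi>'] that ne by simp
    have ca: "0 \<le> c \<and> c \<le> 1" using Suc.prems(2) e by (simp add: decr_def c_def)
    have c1: "c \<le> ext d1 a d1" using False e ca by (auto simp: c_def ext_self)
    have cle: "c \<le> w' n"
    proof -
      have "c \<le> ext e b e" using Suc.prems(2) e by (auto simp: decr_def c_def ext_self)
      then show ?thesis using wl ne c1 by simp
    qed
    have SL: "(\<Sum>t\<le>Suc n. w t * g t) = (\<Sum>t\<le>n. w' t * g t) + c * (g (Suc n) - g n)" for g
      unfolding w_def by (rule sum_split_last)
    have tot: "d1 + d2 = Suc n" using Suc.hyps(2) by simp
    show ?thesis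
      unfolding tot
    proof (intro exI[of _ \<pi>] exI[of _ w] conjI allI impI ballI)
      show "\<pi> \<in> staircases d1 d2" by (rule \<pi>s)
      show "0 \<le> w t" if "t \<le> Suc n" for t using w'0 ne cle ca that by (auto simp: w_def)
      show "(\<Sum>t\<le>Suc n. w t) = 1" using SL[of "\<lambda>_. 1"] w'1 ne by simp
      show "w (Suc n) = min (ext d1 a d1) (ext d2 b d2)"
        using c1 e by (auto simp: w_def c_def ext_self)
      show "b j = (\<Sum>t\<le>Suc n. w t * (if j \<le> snd (jvec \<pi> t) then 1 else 0))" if j: "j \<in> {1..d2}" for j
      proof (cases "j \<le> e")
        case True
        have "(\<Sum>t\<le>n. w' t * (if j \<le> snd (jvec \<pi> t) then 1 else 0))
            = (\<Sum>t\<le>n. w' t * (if j \<le> snd (jvec \<pi>' t) then 1 else 0))"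
          using jv by (intro sum.cong) auto
        then show ?thesis using SL[of "\<lambda>t. if j \<le> snd (jvec \<pi> t) then 1 else 0"] wb True j jv[of n] jvn jvSn ne
          by simp
      next
        case False
        then have jj: "j = Suc e" using j e by simp
        have "(\<Sum>t\<le>n. w' t * (if j \<le> snd (jvec \<pi> t) then 1 else 0)) = 0"
        proof (intro sum.neutral ballI)
          fix t assume "t \<in> {..n}"
          then show "w' t * (if j \<le> snd (jvec \<pi> t) then 1 else 0) = 0"
            using jv[of t] bnd[of t] jj by auto
        qed
        then show ?thesis using SL[of "\<lambda>t. if j \<le> snd (jvec \<pi> t) then 1 else 0"] jj jv[of n] jvn jvSn
          by (simp add: c_def)
      qed
      show "a j = (\<Sum>t\<le>Suc n. w t * (if j \<le> fst (jvec \<pi> t) then 1 else 0))" if j: "j \<in> {1..d1}" for j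
      proof -
        have "(\<Sum>t\<le>n. w' t * (if j \<le> fst (jvec \<pi> t) then 1 else 0))
            = (\<Sum>t\<le>n. w' t * (if j \<le> fst (jvec \<pi>' t) then 1 else 0))"
          using jv by (intro sum.cong) auto
        then show ?thesis using SL[of "\<lambda>t. if j \<le> fst (jvec \<pi> t) then 1 else 0"] wa j jv[of n] jvn jvSn ne
          by simp
      qed
      fix \<psi>
      have "(\<Sum>t\<le>n. w' t * \<psi> (jvec \<pi> t)) = (\<Sum>t\<le>n. w' t * \<psi> (jvec \<pi>' t))"
        using jv by (intro sum.cong) auto
      moreover have "stair_expr \<psi> \<pi> a b = stair_expr \<psi> \<pi>' a b + (\<psi> (jvec \<pi> (Suc n)) - \<psi> (jvec \<pi>' n)) * c"
        unfolding \<pi>_def using stair_expr_append[of \<psi> \<pi>' "(2, Suc e)" a b] len by (simp add: c_def)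
      ultimately show "stair_expr \<psi> \<pi> a b = (\<Sum>t\<le>Suc n. w t * \<psi> (jvec \<pi> t))"
        using SL[of "\<lambda>t. \<psi> (jvec \<pi> t)"] wpsi ne jv[of n] by (simp add: algebra_simps)
    qed
  qed
qed




definition supermod :: "nat \<Rightarrow> nat \<Rightarrow> (nat \<times> nat \<Rightarrow> real) \<Rightarrow> bool" where
  "supermod d1 d2 \<psi> \<longleftrightarrow>
    (\<forall>i k k'. i < d1 \<longrightarrow> k \<le> k' \<longrightarrow> k' \<le> d2 \<longrightarrow> \<psi> (Suc i, k) - \<psi> (i, k) \<le> \<psi> (Suc i, k') - \<psi> (i, k')) \<and>
    (\<forall>k i i'. k < d2 \<longrightarrow> i \<le> i' \<longrightarrow> i' \<le> d1 \<longrightarrow> \<psi> (i, Suc k) - \<psi> (i, k) \<le> \<psi> (i', Suc k) - \<psi> (i', k))"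

lemma stair_super:
  assumes \<pi>: "\<pi> \<in> staircases d1 d2" and s: "s1 \<le> d1" "s2 \<le> d2"
    and a: "\<forall>j\<in>{1..d1}. a j = (if j \<le> s1 then 1 else 0)"
    and b: "\<forall>j\<in>{1..d2}. b j = (if j \<le> s2 then 1 else 0)"
    and sm: "supermod d1 d2 \<psi>"
  shows "\<psi> (s1, s2) \<le> stair_expr \<psi> \<pi> a b"
proof -
  note sb = stair_basic[OF \<pi>]
  define trm where "trm t = (\<psi> (jvec \<pi> t) - \<psi> (jvec \<pi> (t - 1))) *
        (if fst (\<pi> ! (t - 1)) = 1 then a else b) (snd (\<pi> ! (t - 1)))" for t
  have claim: "\<psi> (min (fst (jvec \<pi> T)) s1, min (snd (jvec \<pi> T)) s2) \<le> \<psi> (0, 0) + (\<Sum>t\<in>{1..T}. trm t)"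
    if "T \<le> d1 + d2" for T
    using that
  proof (induction T)
    case 0 then show ?case by simp
  next
    case (Suc T)
    then have IH: "\<psi> (min (fst (jvec \<pi> T)) s1, min (snd (jvec \<pi> T)) s2) \<le> \<psi> (0, 0) + (\<Sum>t\<in>{1..T}. trm t)"
      by simp
    have TN: "T < d1 + d2" using Suc.prems by simp
    obtain i k where ik: "jvec \<pi> T = (i, k)" by (cases "jvec \<pi> T")
    have bS: "fst (jvec \<pi> (Suc T)) \<le> d1 \<and> snd (jvec \<pi> (Suc T)) \<le> d2" using sb(4) Suc.prems by blast
    have "\<psi> (min (fst (jvec \<pi> (Suc T))) s1, min (snd (jvec \<pi> (Suc T))) s2)
        \<le> \<psi> (min (fst (jvec \<pi> T)) s1, min (snd (jvec \<pi> T)) s2) + trm (Suc T)"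
    proof (cases "fst (\<pi> ! T) = 1")
      case True
      note st = sb(5)[OF TN True]
      have j1: "jvec \<pi> (Suc T) = (Suc i, k)" and sn: "snd (\<pi> ! T) = Suc i"
        using st ik by (simp_all del: jvec.simps)
      have i1: "Suc i \<le> d1" and kd: "k \<le> d2" using bS j1 by auto
      have tm: "trm (Suc T) = (\<psi> (Suc i, k) - \<psi> (i, k)) * (if Suc i \<le> s1 then 1 else 0)"
        using j1 sn ik a i1 True by (simp add: trm_def del: jvec.simps)
      show ?thesis
      proof (cases "Suc i \<le> s1")
        case True
        have "\<psi> (Suc i, min k s2) - \<psi> (i, min k s2) \<le> \<psi> (Suc i, k) - \<psi> (i, k)"
          using sm i1 kd unfolding supermod_def by simp
        then show ?thesis using True j1 ik tm by (simp add: min_def del: jvec.simps)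
      next
        case False
        then have "min (Suc i) s1 = min i s1" by simp
        then show ?thesis using j1 ik tm False by (simp del: jvec.simps)
      qed
    next
      case False
      note st = sb(6)[OF TN False]
      have j1: "jvec \<pi> (Suc T) = (i, Suc k)" and sn: "snd (\<pi> ! T) = Suc k"
        using st ik by (simp_all del: jvec.simps)
      have i1: "Suc k \<le> d2" and kd: "i \<le> d1" using bS j1 by auto
      have tm: "trm (Suc T) = (\<psi> (i, Suc k) - \<psi> (i, k)) * (if Suc k \<le> s2 then 1 else 0)"
        using j1 sn ik b i1 False by (simp add: trm_def del: jvec.simps)
      show ?thesis
      proof (cases "Suc k \<le> s2")
        case True
        have "\<psi> (min i s1, Suc k) - \<psi> (min i s1, k) \<le> \<psi> (i, Suc k) - \<psi> (i, k)"
          using sm i1 kd unfolding supermod_def by simp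
        then show ?thesis using True j1 ik tm by (simp add: min_def del: jvec.simps)
      next
        case False
        then have "min (Suc k) s2 = min k s2" by simp
        then show ?thesis using j1 ik tm False by (simp del: jvec.simps)
      qed
    qed
    then show ?case using IH by simp
  qed
  show ?thesis using claim[of "d1 + d2"] sb(1,3) s unfolding stair_expr_def trm_def by simp
qed

lemma mono_upto: "\<forall>j<d. (A::nat\<Rightarrow>real) j \<le> A (Suc j) \<Longrightarrow> i \<le> i' \<Longrightarrow> i' \<le> d \<Longrightarrow> A i \<le> A i'"
proof (induction i' arbitrary: i)
  case 0 then show ?case by simp
next
  case (Suc i')
  show ?case
  proof (cases "i = Suc i'")
    case False
    then have "A i \<le> A i'" using Suc by simp
    then show ?thesis using Suc.prems by (meson Suc_le_lessD order_trans)
  qed simp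
qed

lemma prod_supermod:
  assumes "\<forall>j<d1. A j \<le> A (Suc j)" "\<forall>j<d2. B j \<le> B (Suc j)"
  shows "supermod d1 d2 (\<lambda>(i, k). A i * B k)"
  unfolding supermod_def
proof (intro conjI allI impI)
  fix i k k' assume h: "i < d1" "k \<le> k'" "k' \<le> d2"
  have "0 \<le> A (Suc i) - A i" using assms(1) h by simp
  moreover have "B k \<le> B k'" using mono_upto[OF assms(2) h(2,3)] .
  ultimately have "(A (Suc i) - A i) * B k \<le> (A (Suc i) - A i) * B k'" by (metis mult_left_mono)
  then show "(case (Suc i, k) of (i, k) \<Rightarrow> A i * B k) - (case (i, k) of (i, k) \<Rightarrow> A i * B k)
           \<le> (case (Suc i, k') of (i, k) \<Rightarrow> A i * B k) - (case (i, k') of (i, k) \<Rightarrow> A i * B k)"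
    by (simp add: algebra_simps)
next
  fix k i i' assume h: "k < d2" "i \<le> i'" "i' \<le> d1"
  have "0 \<le> B (Suc k) - B k" using assms(2) h by simp
  moreover have "A i \<le> A i'" using mono_upto[OF assms(1) h(2,3)] .
  ultimately have "(B (Suc k) - B k) * A i \<le> (B (Suc k) - B k) * A i'" by (metis mult_left_mono)
  then show "(case (i, Suc k) of (i, k) \<Rightarrow> A i * B k) - (case (i, k) of (i, k) \<Rightarrow> A i * B k)
           \<le> (case (i', Suc k) of (i, k) \<Rightarrow> A i * B k) - (case (i', k) of (i, k) \<Rightarrow> A i * B k)"
    by (simp add: algebra_simps)
qed

lemma stair_neg: "stair_expr (\<lambda>j. - \<psi> j) \<pi> a b = - stair_expr \<psi> \<pi> a b"
  unfolding stair_expr_def by (simp add: sum_negf[symmetric] algebra_simps)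




lemma ext_fcomb: "ext d (fcomb u z z') j = (1 - u) * ext d z j + u * ext d z' j"
  by (simp add: ext_def fcomb_def)

lemma Tmap_fcomb: "Tmap d (fcomb u z z') j = (1 - u) * Tmap d z j + u * Tmap d z' j"
  by (simp add: Tmap_def ext_fcomb algebra_simps)

lemma Linv_fcomb: "Linv d \<rho> (fcomb u z z') j = (1 - u) * Linv d \<rho> z j + u * Linv d \<rho> z' j"
proof -
  let ?c = "\<lambda>k m. (if k = inv_into {0..d} \<rho> m then 1 else 0::real)"
  have "Linv d \<rho> (fcomb u z z') j = (\<Sum>k\<in>{j..d}. \<Sum>m\<in>{0..d}. ?c k m * ((1 - u) * Tmap d z m + u * Tmap d z' m))"
    by (simp add: Linv_def Tinv_def Pperm_def Tmap_fcomb)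
  also have "\<dots> = (\<Sum>k\<in>{j..d}. \<Sum>m\<in>{0..d}. (1 - u) * (?c k m * Tmap d z m) + u * (?c k m * Tmap d z' m))"
    by (simp only: distrib_left mult.left_commute)
  also have "\<dots> = (1 - u) * Linv d \<rho> z j + u * Linv d \<rho> z' j"
    by (simp only: Linv_def Tinv_def Pperm_def comp_def sum.distrib sum_distrib_left)
  finally show ?thesis .
qed

lemma Linv_fcomb': "Linv d \<rho> (fcomb u z z') = fcomb u (Linv d \<rho> z) (Linv d \<rho> z')"
  by (rule ext) (subst Linv_fcomb, simp add: fcomb_def)

lemma aux3: "(P::real) + ((1 - u) * X + u * Y) = (1 - u) * (P + X) + u * (P + Y)"
  by (simp add: algebra_simps)

lemma stair_fcomb:
  "stair_expr \<psi> \<pi> (fcomb u a a') (fcomb u b b') = (1 - u) * stair_expr \<psi> \<pi> a b + u * stair_expr \<psi> \<pi> a' b'"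
proof -
  have h: "(if P then fcomb u a a' else fcomb u b b') x = (1 - u) * (if P then a else b) x + u * (if P then a' else b') x"
    for P x by (simp add: fcomb_def)
  let ?A = "\<lambda>t. (if fst (\<pi> ! (t - 1)) = 1 then a else b) (snd (\<pi> ! (t - 1)))"
  let ?B = "\<lambda>t. (if fst (\<pi> ! (t - 1)) = 1 then a' else b') (snd (\<pi> ! (t - 1)))"
  let ?D = "\<lambda>t. \<psi> (jvec \<pi> t) - \<psi> (jvec \<pi> (t - 1))"
  have "stair_expr \<psi> \<pi> (fcomb u a a') (fcomb u b b') = \<psi> (jvec \<pi> 0) + (\<Sum>t\<in>{1..length \<pi>}. (1 - u) * (?D t * ?A t) + u * (?D t * ?B t))"
    unfolding stair_expr_def h by (simp only: distrib_left mult.left_commute)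
  also have "\<dots> = \<psi> (jvec \<pi> 0) + ((1 - u) * (\<Sum>t\<in>{1..length \<pi>}. ?D t * ?A t) + u * (\<Sum>t\<in>{1..length \<pi>}. ?D t * ?B t))"
    by (simp only: sum.distrib sum_distrib_left)
  also have "\<dots> = (1 - u) * stair_expr \<psi> \<pi> a b + u * stair_expr \<psi> \<pi> a' b'"
    unfolding stair_expr_def by (rule aux3)
  finally show ?thesis .
qed

lemma cvx_le: "(a::real) \<le> b \<Longrightarrow> a' \<le> b' \<Longrightarrow> 0 \<le> u \<Longrightarrow> u \<le> 1 \<Longrightarrow> (1 - u) * a + u * a' \<le> (1 - u) * b + u * b'"
  by (intro add_mono mult_left_mono) auto

lemma cvx_le1: "(a::real) \<le> 1 \<Longrightarrow> a' \<le> 1 \<Longrightarrow> 0 \<le> u \<Longrightarrow> u \<le> 1 \<Longrightarrow> (1 - u) * a + u * a' \<le> 1"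
  using cvx_le[of a 1 a' 1 u] by simp
lemma cvx_ge0: "0 \<le> (a::real) \<Longrightarrow> 0 \<le> a' \<Longrightarrow> 0 \<le> u \<Longrightarrow> u \<le> 1 \<Longrightarrow> 0 \<le> (1 - u) * a + u * a'"
  using cvx_le[of 0 a 0 a' u] by simp

lemma Delta_fcomb: "z \<in> Delta d \<Longrightarrow> z' \<in> Delta d \<Longrightarrow> 0 \<le> u \<Longrightarrow> u \<le> 1 \<Longrightarrow> fcomb u z z' \<in> Delta d"
  unfolding Delta_def by (auto simp: ext_fcomb intro!: cvx_le)

lemma block_fcomb:
  assumes "block_ok d p \<eta> x z \<delta>" "block_ok d p \<eta> x' z' \<delta>'" "0 \<le> u" "u \<le> 1"
  shows "block_ok d p \<eta> ((1 - u) * x + u * x') (fcomb u z z') (fcomb u \<delta> \<delta>')"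
proof -
  have sA: "(\<Sum>j\<in>S. Tmap d (fcomb u z z') j) = (1 - u) * (\<Sum>j\<in>S. Tmap d z j) + u * (\<Sum>j\<in>S. Tmap d z' j)" for S
    by (simp add: Tmap_fcomb sum.distrib sum_distrib_left)
  have one: "1 - fcomb u \<delta> \<delta>' k = (1 - u) * (1 - \<delta> k) + u * (1 - \<delta>' k)" for k
    by (simp add: fcomb_def algebra_simps)
  have e: "(\<Sum>j\<in>{1..d}. (p j - p (j - 1)) * fcomb u z z' j) = (1 - u) * (\<Sum>j\<in>{1..d}. (p j - p (j - 1)) * z j) + u * (\<Sum>j\<in>{1..d}. (p j - p (j - 1)) * z' j)"
    by (simp only: fcomb_def distrib_left mult.left_commute sum.distrib sum_distrib_left)
  have in1: "inB p d ((1 - u) * x + u * x') (fcomb u z z')"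
    using assms Delta_fcomb unfolding block_ok_def inB_def e
    by (simp add: aux3)
  show ?thesis
    using assms in1 Delta_fcomb[of z d z' u] unfolding block_ok_def
    apply (simp only: sA one)
    apply (intro conjI allI impI ballI)
    apply (simp_all add: fcomb_def)
    apply (auto intro!: cvx_le cvx_le1 cvx_ge0 simp: block_ok_def)
    done
qed

definition Qset where
  "Qset d1 d2 p1 p2 f1 f2 \<sigma>1 \<sigma>2 \<tau>1 \<tau>2 \<eta>1 \<eta>2 = relaxation d1 d2 p1 p2 f1 f2 \<sigma>1 \<sigma>2 \<tau>1 \<tau>2 \<eta>1 \<eta>2"

lemma relax_pcomb:
  assumes "a \<in> relaxation d1 d2 p1 p2 f1 f2 \<sigma>1 \<sigma>2 \<tau>1 \<tau>2 \<eta>1 \<eta>2"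
    "b \<in> relaxation d1 d2 p1 p2 f1 f2 \<sigma>1 \<sigma>2 \<tau>1 \<tau>2 \<eta>1 \<eta>2" "0 \<le> u" "u \<le> 1"
  shows "pcomb u a b \<in> relaxation d1 d2 p1 p2 f1 f2 \<sigma>1 \<sigma>2 \<tau>1 \<tau>2 \<eta>1 \<eta>2"
proof -
  obtain x1 x2 z1 z2 m a1 a2 where a: "a = (x1, x2, z1, z2, m, a1, a2)" by (cases a) auto
  obtain y1 y2 w1 w2 m' b1 b2 where b: "b = (y1, y2, w1, w2, m', b1, b2)" by (cases b) auto
  have A: "block_ok d1 p1 \<eta>1 x1 z1 a1" "block_ok d2 p2 \<eta>2 x2 z2 a2"
    "\<forall>\<pi>\<in>staircases d1 d2. m \<le> stair_expr (psi f1 f2 p1 p2 \<sigma>1 \<sigma>2) \<pi> (Linv d1 \<sigma>1 z1) (Linv d2 \<sigma>2 z2) \<and>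
          m \<ge> stair_expr (psi f1 f2 p1 p2 \<tau>1 \<tau>2) \<pi> (Linv d1 \<tau>1 z1) (Linv d2 \<tau>2 z2)"
    using assms(1) unfolding a relaxation_def by simp_all
  have B: "block_ok d1 p1 \<eta>1 y1 w1 b1" "block_ok d2 p2 \<eta>2 y2 w2 b2"
    "\<forall>\<pi>\<in>staircases d1 d2. m' \<le> stair_expr (psi f1 f2 p1 p2 \<sigma>1 \<sigma>2) \<pi> (Linv d1 \<sigma>1 w1) (Linv d2 \<sigma>2 w2) \<and>
          m' \<ge> stair_expr (psi f1 f2 p1 p2 \<tau>1 \<tau>2) \<pi> (Linv d1 \<tau>1 w1) (Linv d2 \<tau>2 w2)"
    using assms(2) unfolding b relaxation_def by simp_all
  have pc: "pcomb u a b = ((1-u)*x1 + u*y1, (1-u)*x2+u*y2, fcomb u z1 w1, fcomb u z2 w2, (1-u)*m + u*m', fcomb u a1 b1, fcomb u a2 b2)"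
    unfolding a b pcomb_def by simp
  show ?thesis
    unfolding pc relaxation_def mem_Collect_eq case_prod_conv
  proof (intro conjI ballI)
    show "block_ok d1 p1 \<eta>1 ((1 - u) * x1 + u * y1) (fcomb u z1 w1) (fcomb u a1 b1)"
      by (rule block_fcomb[OF A(1) B(1) assms(3,4)])
    show "block_ok d2 p2 \<eta>2 ((1 - u) * x2 + u * y2) (fcomb u z2 w2) (fcomb u a2 b2)"
      by (rule block_fcomb[OF A(2) B(2) assms(3,4)])
    fix \<pi> assume \<pi>: "\<pi> \<in> staircases d1 d2"
    show "(1 - u) * m + u * m' \<le> stair_expr (psi f1 f2 p1 p2 \<sigma>1 \<sigma>2) \<pi> (Linv d1 \<sigma>1 (fcomb u z1 w1)) (Linv d2 \<sigma>2 (fcomb u z2 w2))"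
      unfolding Linv_fcomb' stair_fcomb using A(3) B(3) \<pi> assms(3,4) by (intro cvx_le) auto
    show "(1 - u) * m + u * m' \<ge> stair_expr (psi f1 f2 p1 p2 \<tau>1 \<tau>2) \<pi> (Linv d1 \<tau>1 (fcomb u z1 w1)) (Linv d2 \<tau>2 (fcomb u z2 w2))"
      unfolding Linv_fcomb' stair_fcomb using A(3) B(3) \<pi> assms(3,4) by (intro cvx_le) auto
  qed
qed

inductive_set chull :: "pt set \<Rightarrow> pt set" for G where
  base: "g \<in> G \<Longrightarrow> g \<in> chull G"
| step: "a \<in> chull G \<Longrightarrow> b \<in> chull G \<Longrightarrow> 0 \<le> u \<Longrightarrow> u \<le> 1 \<Longrightarrow> pcomb u a b \<in> chull G"

lemma chull_sub:
  assumes "G \<subseteq> Q" "\<And>a b u. a \<in> Q \<Longrightarrow> b \<in> Q \<Longrightarrow> 0 \<le> u \<Longrightarrow> u \<le> 1 \<Longrightarrow> pcomb u a b \<in> Q"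
  shows "chull G \<subseteq> Q"
proof
  fix x assume "x \<in> chull G"
  then show "x \<in> Q"
  proof induction
    case (base g) then show ?case using assms(1) by blast
  next
    case (step a b u) then show ?case using assms(2) by blast
  qed
qed

lemma pcomb_0: "pcomb 0 a b = a"
  by (simp add: pcomb_def fcomb_def split: prod.splits)
lemma pcomb_1: "pcomb 1 a b = b"
  by (simp add: pcomb_def fcomb_def split: prod.splits)
lemma pcomb_same: "pcomb u a a = a"
  by (simp add: pcomb_def fcomb_def algebra_simps split: prod.splits)

lemma vertex_no:
  assumes "vertex_of v Q" "a \<in> Q" "b \<in> Q" "0 < u" "u < 1" "v = pcomb u a b"
  shows "a = b"
proof (rule ccontr)
  assume "a \<noteq> b"
  then have "\<exists>a\<in>Q. \<exists>b\<in>Q. a \<noteq> b \<and> (\<exists>u. 0 < u \<and> u < 1 \<and> v = pcomb u a b)"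
    using assms(2-6) by blast
  then show False using assms(1) unfolding vertex_of_def by argo
qed

lemma vertex_chull:
  assumes "v \<in> chull G" "vertex_of v Q" "chull G \<subseteq> Q"
  shows "v \<in> G"
  using assms(1,2)
proof induction
  case (base g) then show ?case by simp
next
  case (step a b u)
  have aQ: "a \<in> Q" and bQ: "b \<in> Q" using step.hyps(1,2) assms(3) by auto
  have ab: "pcomb u a b = a \<or> pcomb u a b = b"
  proof (cases "u = 0 \<or> u = 1")
    case True then show ?thesis by (metis pcomb_0 pcomb_1)
  next
    case False
    then have u: "0 < u" "u < 1" using step.hyps(3,4) by auto
    have "a = b" by (rule vertex_no[OF step.prems aQ bQ u refl])
    then show ?thesis by (simp add: pcomb_same)
  qed
  then show ?case
  proof
    assume "pcomb u a b = a" then show ?thesis using step.IH(1) step.prems by simp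
  next
    assume "pcomb u a b = b" then show ?thesis using step.IH(2) step.prems by simp
  qed
qed




definition "X1 (w::pt) = fst w"
definition "X2 (w::pt) = fst (snd w)"
definition "Z1 (w::pt) = fst (snd (snd w))"
definition "Z2 (w::pt) = fst (snd (snd (snd w)))"
definition "MU (w::pt) = fst (snd (snd (snd (snd w))))"
definition "D1 (w::pt) = fst (snd (snd (snd (snd (snd w)))))"
definition "D2 (w::pt) = snd (snd (snd (snd (snd (snd w)))))"

lemma pt_acc: "w = (X1 w, X2 w, Z1 w, Z2 w, MU w, D1 w, D2 w)"
  by (simp add: X1_def X2_def Z1_def Z2_def MU_def D1_def D2_def)

lemma pcomb_acc: "pcomb u a b = ((1-u) * X1 a + u * X1 b, (1-u) * X2 a + u * X2 b, fcomb u (Z1 a) (Z1 b),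
   fcomb u (Z2 a) (Z2 b), (1-u) * MU a + u * MU b, fcomb u (D1 a) (D1 b), fcomb u (D2 a) (D2 b))"
  by (simp add: pcomb_def X1_def X2_def Z1_def Z2_def MU_def D1_def D2_def split: prod.splits)

definition psum :: "nat set \<Rightarrow> (nat \<Rightarrow> real) \<Rightarrow> (nat \<Rightarrow> pt) \<Rightarrow> pt" where
  "psum I c w = ((\<Sum>i\<in>I. c i * X1 (w i)), (\<Sum>i\<in>I. c i * X2 (w i)), (\<lambda>j. \<Sum>i\<in>I. c i * Z1 (w i) j),
     (\<lambda>j. \<Sum>i\<in>I. c i * Z2 (w i) j), (\<Sum>i\<in>I. c i * MU (w i)),
     (\<lambda>j. \<Sum>i\<in>I. c i * D1 (w i) j), (\<lambda>j. \<Sum>i\<in>I. c i * D2 (w i) j))"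

lemma comb_eq:
  assumes "s = 1 - ci" "s \<noteq> 0"
  shows "ci * xi + (\<Sum>j\<in>J. c j * x j) = (1 - ci) * (\<Sum>j\<in>J. c j / s * x j) + ci * (xi::real)"
proof -
  have "(1 - ci) * (\<Sum>j\<in>J. c j / s * x j) = (\<Sum>j\<in>J. c j * x j)"
    unfolding sum_distrib_left using assms by (intro sum.cong) auto
  then show ?thesis by simp
qed

lemma psum_chull:
  assumes "finite I" "I \<noteq> {}" "\<forall>i\<in>I. 0 \<le> c i" "sum c I = 1" "\<forall>i\<in>I. w i \<in> G"
  shows "psum I c w \<in> chull G"
  using assms(1,2,3,4,5)
proof (induction I arbitrary: c rule: finite_ne_induct)
  case (singleton i)
  then have "psum {i} c w = w i" by (subst (2) pt_acc) (simp add: psum_def)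
  then show ?case using singleton.prems chull.base by (metis singletonI)
next
  case (insert i J)
  show ?case
  proof (cases "c i = 1")
    case True
    then have "sum c J = 0" using insert by simp
    then have z: "\<forall>j\<in>J. c j = 0" using insert sum_nonneg_eq_0_iff by blast
    have "psum (insert i J) c w = w i"
      by (subst (2) pt_acc) (simp add: psum_def insert z True)
    then show ?thesis using insert.prems chull.base by (metis insertI1)
  next
    case False
    define s where "s = 1 - c i"
    have ci: "0 \<le> c i" "c i \<le> 1" using insert sum_nonneg[of J c] by auto
    have s0: "s \<noteq> 0" using False s_def by simp
    have spos: "0 < s" using s0 ci s_def by simp
    have sJ: "sum c J = s" using insert s_def by simp
    let ?c' = "\<lambda>j. c j / s"
    have IH: "psum J ?c' w \<in> chull G"
      using insert.IH[of ?c'] insert.prems spos sJ s0 by (simp add: sum_divide_distrib[symmetric])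
    have eq: "psum (insert i J) c w = pcomb (c i) (psum J ?c' w) (w i)"
      unfolding pcomb_acc
      by (simp add: psum_def X1_def X2_def Z1_def Z2_def MU_def D1_def D2_def fcomb_def insert
          comb_eq[OF s_def s0])
    have wi: "w i \<in> chull G" using insert.prems chull.base by (metis insertI1)
    show ?thesis unfolding eq using IH wi ci by (rule chull.step)
  qed
qed




lemma sum_reindex_bij:
  assumes "bij_betw \<rho> {0..d} {0..d}"
  shows "(\<Sum>k\<in>{0..d}. f (\<rho> k)) = (\<Sum>k\<in>{0..d}. (f k::real))"
  using sum.reindex_bij_betw[OF assms] .

lemma decr_Linv:
  assumes r: "bij_betw \<rho> {0..d} {0..d}" and B: "block_ok d p \<eta> x z \<delta>"
  shows "decr d (Linv d \<rho> z)"
proof -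
  have nn: "0 \<le> Tmap d z (\<rho> k)" if "k \<in> {0..d}" for k
    using block_basic(1)[OF B] bij_betw_apply[OF r that] by blast
  have tot: "(\<Sum>k\<in>{0..d}. Tmap d z (\<rho> k)) = 1" using sum_reindex_bij[OF r] Tmap_sum by simp
  show ?thesis unfolding decr_def Linv_eq[OF r]
  proof (intro conjI allI impI)
    fix j assume j: "1 \<le> j \<and> j \<le> d"
    show "0 \<le> (\<Sum>k = j..d. Tmap d z (\<rho> k))" using nn by (intro sum_nonneg) auto
    have "(\<Sum>k = j..d. Tmap d z (\<rho> k)) \<le> (\<Sum>k\<in>{0..d}. Tmap d z (\<rho> k))"
      using nn by (intro sum_mono2) auto
    then show "(\<Sum>k = j..d. Tmap d z (\<rho> k)) \<le> 1" using tot by simp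
  next
    fix j assume j: "1 \<le> j \<and> j < d"
    show "(\<Sum>k = Suc j..d. Tmap d z (\<rho> k)) \<le> (\<Sum>k = j..d. Tmap d z (\<rho> k))"
      using nn by (intro sum_mono2) auto
  qed
qed

lemma lam_rep:
  assumes r: "bij_betw \<rho> {0..d} {0..d}" and B: "block_ok d p \<eta> x z \<delta>"
    and T: "finite T" and w1: "sum w T = 1" and g: "\<forall>t\<in>T. g t \<le> d"
    and L: "\<forall>j\<in>{1..d}. Linv d \<rho> z j = (\<Sum>t\<in>T. w t * (if j \<le> g t then 1 else 0))"
  shows "\<forall>k\<in>{0..d}. Tmap d z k = (\<Sum>t\<in>T. w t * (if \<rho> (g t) = k then 1 else 0))"
proof
  define A where "A j = (\<Sum>k\<in>{j..d}. Tmap d z (\<rho> k))" for j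
  define Y where "Y j = (\<Sum>t\<in>T. w t * (if j \<le> g t then 1 else 0::real))" for j
  have AY: "A j = Y j" if jj: "j \<le> Suc d" for j
  proof -
    have "j = 0 \<or> j \<in> {1..d} \<or> j = Suc d" using jj by auto
    then consider "j = 0" | "j \<in> {1..d}" | "j = Suc d" by blast
    then show ?thesis
    proof cases
      case 1 then show ?thesis using sum_reindex_bij[OF r] Tmap_sum w1 by (simp add: A_def Y_def)
    next
      case 2 then show ?thesis using L Linv_eq[OF r] by (simp add: A_def Y_def)
    next
      case 3
      have "Y j = 0" unfolding Y_def using g 3 by (intro sum.neutral) auto
      then show ?thesis using 3 by (simp add: A_def)
    qed
  qed
  fix k assume k: "k \<in> {0..d}"
  define k' where "k' = inv_into {0..d} \<rho> k"
  have k': "k' \<in> {0..d}" "\<rho> k' = k" unfolding k'_def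
    using k r bij_betw_inv_into_right[OF r k] bij_betw_apply[OF bij_betw_inv_into[OF r] k] by auto
  have "Tmap d z k = A k' - A (Suc k')"
    using k' by (simp add: A_def sum.atLeast_Suc_atMost)
  also have "\<dots> = Y k' - Y (Suc k')" using AY k' by simp
  also have "\<dots> = (\<Sum>t\<in>T. w t * (if g t = k' then 1 else 0))"
    unfolding Y_def sum_subtractf[symmetric] by (intro sum.cong) auto
  also have "\<dots> = (\<Sum>t\<in>T. w t * (if \<rho> (g t) = k then 1 else 0))"
  proof (intro sum.cong refl)
    fix t assume "t \<in> T"
    then have "g t \<in> {0..d}" using g by auto
    then have "(g t = k') = (\<rho> (g t) = k)" using k' r unfolding bij_betw_def inj_on_def by metis
    then show "w t * (if g t = k' then 1 else 0) = w t * (if \<rho> (g t) = k then 1 else 0)" by simp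
  qed
  finally show "Tmap d z k = (\<Sum>t\<in>T. w t * (if \<rho> (g t) = k then 1 else 0))" .
qed

lemma DEC:
  assumes r1: "bij_betw \<rho>1 {0..d1} {0..d1}" and r2: "bij_betw \<rho>2 {0..d2} {0..d2}"
    and B1: "block_ok d1 p1 \<eta>1 x1 z1 \<delta>1" and B2: "block_ok d2 p2 \<eta>2 x2 z2 \<delta>2"
  shows "\<exists>\<pi> w. \<pi> \<in> staircases d1 d2 \<and> (\<forall>t\<le>d1+d2. 0 \<le> w t) \<and> (\<Sum>t\<le>d1+d2. w t) = 1 \<and>
     stair_expr (psi f1 f2 p1 p2 \<rho>1 \<rho>2) \<pi> (Linv d1 \<rho>1 z1) (Linv d2 \<rho>2 z2) =
       (\<Sum>t\<le>d1+d2. w t * (f1 (p1 (\<rho>1 (fst (jvec \<pi> t)))) * f2 (p2 (\<rho>2 (snd (jvec \<pi> t)))))) \<and>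
     (\<forall>k\<in>{0..d1}. Tmap d1 z1 k = (\<Sum>t\<le>d1+d2. w t * (if \<rho>1 (fst (jvec \<pi> t)) = k then 1 else 0))) \<and>
     (\<forall>k\<in>{0..d2}. Tmap d2 z2 k = (\<Sum>t\<le>d1+d2. w t * (if \<rho>2 (snd (jvec \<pi> t)) = k then 1 else 0))) \<and>
     (\<forall>t\<le>d1+d2. \<rho>1 (fst (jvec \<pi> t)) \<in> {0..d1} \<and> \<rho>2 (snd (jvec \<pi> t)) \<in> {0..d2})"
proof -
  obtain \<pi> w where \<pi>: "\<pi> \<in> staircases d1 d2" and w0: "\<forall>t\<le>d1+d2. 0 \<le> w t"
    and w1: "(\<Sum>t\<le>d1+d2. w t) = 1"
    and wa: "\<forall>j\<in>{1..d1}. Linv d1 \<rho>1 z1 j = (\<Sum>t\<le>d1+d2. w t * (if j \<le> fst (jvec \<pi> t) then 1 else 0))"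
    and wb: "\<forall>j\<in>{1..d2}. Linv d2 \<rho>2 z2 j = (\<Sum>t\<le>d1+d2. w t * (if j \<le> snd (jvec \<pi> t) then 1 else 0))"
    and wpsi: "\<forall>\<psi>. stair_expr \<psi> \<pi> (Linv d1 \<rho>1 z1) (Linv d2 \<rho>2 z2) = (\<Sum>t\<le>d1+d2. w t * \<psi> (jvec \<pi> t))"
    using chain[OF decr_Linv[OF r1 B1] decr_Linv[OF r2 B2]] by blast
  have bnd: "\<forall>t\<in>{..d1+d2}. fst (jvec \<pi> t) \<le> d1" "\<forall>t\<in>{..d1+d2}. snd (jvec \<pi> t) \<le> d2"
    using stair_basic(4)[OF \<pi>] by auto
  show ?thesis
  proof (intro exI[of _ \<pi>] exI[of _ w] conjI)
    show "\<pi> \<in> staircases d1 d2" "\<forall>t\<le>d1+d2. 0 \<le> w t" "(\<Sum>t\<le>d1+d2. w t) = 1" by fact+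
    show "stair_expr (psi f1 f2 p1 p2 \<rho>1 \<rho>2) \<pi> (Linv d1 \<rho>1 z1) (Linv d2 \<rho>2 z2) =
       (\<Sum>t\<le>d1+d2. w t * (f1 (p1 (\<rho>1 (fst (jvec \<pi> t)))) * f2 (p2 (\<rho>2 (snd (jvec \<pi> t))))))"
      using wpsi by (simp add: psi_def)
    show "\<forall>k\<in>{0..d1}. Tmap d1 z1 k = (\<Sum>t\<le>d1+d2. w t * (if \<rho>1 (fst (jvec \<pi> t)) = k then 1 else 0))"
      by (rule lam_rep[OF r1 B1 _ w1 bnd(1) wa]) simp
    show "\<forall>k\<in>{0..d2}. Tmap d2 z2 k = (\<Sum>t\<le>d1+d2. w t * (if \<rho>2 (snd (jvec \<pi> t)) = k then 1 else 0))"
      by (rule lam_rep[OF r2 B2 _ w1 bnd(2) wb]) simp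
    show "\<forall>t\<le>d1+d2. \<rho>1 (fst (jvec \<pi> t)) \<in> {0..d1} \<and> \<rho>2 (snd (jvec \<pi> t)) \<in> {0..d2}"
      using bnd bij_betw_apply[OF r1] bij_betw_apply[OF r2] by auto
  qed
qed




lemma Tmap_vz: "t \<le> d \<Longrightarrow> k \<in> {0..d} \<Longrightarrow> Tmap d (vz t) k = (if k = t then 1 else 0)"
  by (auto simp: Tmap_def ext_def vz_def)

lemma vz_Delta: "t \<le> d \<Longrightarrow> vz t \<in> Delta d"
  by (auto simp: Delta_def ext_def vz_def)

lemma block_vertex:
  assumes t: "t \<le> d"
  shows "block_ok d p \<eta> (p t) (vz t) (vd \<eta> d t)"
  unfolding block_ok_def
proof (intro conjI allI impI ballI)
  show "vz t j = 0" if "j \<notin> {1..d}" for j using that t by (auto simp: vz_def)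
  show "vd \<eta> d t k = 0" if "k \<notin> {1..Kdim d}" for k using that by (auto simp: vd_def)
  show "vz t \<in> Delta d" by (rule vz_Delta[OF t])
  show "inB p d (p t) (vz t)" unfolding inB_def using vz_Delta[OF t] ptele[OF t, of p] by simp
  fix k assume k: "k \<in> {1..Kdim d}"
  show "0 \<le> vd \<eta> d t k" "vd \<eta> d t k \<le> 1" by (auto simp: vd_def)
  have A: "Aset \<eta> d k \<subseteq> {0..d}" by (auto simp: Aset_def)
  have s1: "(\<Sum>j\<in>Aset \<eta> d k. Tmap d (vz t) j) = (if t \<in> Aset \<eta> d k then 1 else 0)"
  proof -
    have "(\<Sum>j\<in>Aset \<eta> d k. Tmap d (vz t) j) = (\<Sum>j\<in>Aset \<eta> d k. if j = t then 1 else 0)"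
      using A t by (intro sum.cong) (auto simp: Tmap_vz)
    then show ?thesis by (simp add: sum.delta' Aset_def)
  qed
  have s2: "(\<Sum>j\<in>{0..d} - Aset \<eta> d k. Tmap d (vz t) j) = (if t \<in> Aset \<eta> d k then 0 else 1)"
  proof -
    have "(\<Sum>j\<in>{0..d} - Aset \<eta> d k. Tmap d (vz t) j) = (\<Sum>j\<in>{0..d} - Aset \<eta> d k. if j = t then 1 else 0)"
      using t by (intro sum.cong) (auto simp: Tmap_vz)
    then show ?thesis using t by (simp add: sum.delta')
  qed
  have "t \<in> Aset \<eta> d k \<longleftrightarrow> \<eta> t k" using t by (auto simp: Aset_def)
  then show "(\<Sum>j\<in>Aset \<eta> d k. Tmap d (vz t) j) \<le> vd \<eta> d t k"
    "(\<Sum>j\<in>{0..d} - Aset \<eta> d k. Tmap d (vz t) j) \<le> 1 - vd \<eta> d t k"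
    using s1 s2 k by (auto simp: vd_def)
qed

lemma Linv_vz:
  assumes r: "bij_betw \<rho> {0..d} {0..d}" and t: "t \<le> d" and j: "j \<in> {1..d}"
  shows "Linv d \<rho> (vz t) j = (if j \<le> inv_into {0..d} \<rho> t then 1 else 0)"
proof -
  define t' where "t' = inv_into {0..d} \<rho> t"
  have tt: "t \<in> {0..d}" using t by simp
  have t': "t' \<in> {0..d}" "\<rho> t' = t" unfolding t'_def
    using bij_betw_inv_into_right[OF r tt] bij_betw_apply[OF bij_betw_inv_into[OF r] tt] by auto
  have "Linv d \<rho> (vz t) j = (\<Sum>k\<in>{j..d}. if k = t' then 1 else 0)"
    unfolding Linv_eq[OF r]
  proof (intro sum.cong refl)
    fix k assume k: "k \<in> {j..d}"
    then have k0: "k \<in> {0..d}" by simp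
    have "(\<rho> k = t) = (k = t')" using t' k0 r unfolding bij_betw_def inj_on_def by metis
    then show "Tmap d (vz t) (\<rho> k) = (if k = t' then 1 else 0)"
      using Tmap_vz[OF t bij_betw_apply[OF r k0]] by simp
  qed
  also have "\<dots> = (if j \<le> t' then 1 else 0)" using t' by (simp add: sum.delta')
  finally show ?thesis unfolding t'_def .
qed

lemma unit_lam:
  assumes B: "block_ok d p \<eta> x z \<delta>" and bin: "\<forall>k\<in>{1..Kdim d}. \<delta> k \<in> {0, 1}"
    and dist: "\<forall>t\<in>{0..d}. \<forall>t'\<in>{0..d}. t \<noteq> t' \<longrightarrow> (\<exists>k\<in>{1..Kdim d}. \<eta> t k \<noteq> \<eta> t' k)"
  shows "\<exists>t\<in>{0..d}. \<forall>k\<in>{0..d}. Tmap d z k = (if k = t then 1 else 0)"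
proof -
  note bb = block_basic[OF B]
  have key: "\<eta> j k = (\<delta> k = 1)" if j: "j \<in> {0..d}" "Tmap d z j \<noteq> 0" and k: "k \<in> {1..Kdim d}" for j k
  proof -
    have A: "Aset \<eta> d k \<subseteq> {0..d}" by (auto simp: Aset_def)
    have le2: "(\<Sum>j\<in>{0..d} - Aset \<eta> d k. Tmap d z j) \<le> 1 - \<delta> k" using B k unfolding block_ok_def by blast
    show ?thesis
    proof (cases "\<delta> k = 1")
      case True
      then have "(\<Sum>j\<in>{0..d} - Aset \<eta> d k. Tmap d z j) = 0"
        using le2 bb(1) by (intro antisym) (auto intro: sum_nonneg)
      then have "\<forall>i\<in>{0..d} - Aset \<eta> d k. Tmap d z i = 0"
        using bb(1) by (subst (asm) sum_nonneg_eq_0_iff) auto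
      then have "j \<in> Aset \<eta> d k" using j by blast
      then show ?thesis using True by (simp add: Aset_def)
    next
      case False
      then have d0: "\<delta> k = 0" using bin k by auto
      then have "(\<Sum>j\<in>Aset \<eta> d k. Tmap d z j) = 0"
        using bb(4)[OF k] bb(1) A by (simp)
      then have "\<forall>i\<in>Aset \<eta> d k. Tmap d z i = 0"
        using bb(1) A by (subst (asm) sum_nonneg_eq_0_iff) (auto simp: Aset_def)
      then have "j \<notin> Aset \<eta> d k" using j by blast
      then show ?thesis using d0 j by (simp add: Aset_def)
    qed
  qed
  obtain t where t: "t \<in> {0..d}" "Tmap d z t \<noteq> 0"
    using Tmap_sum[of d z] by (metis (no_types, lifting) sum.neutral zero_neq_one)
  have oth: "Tmap d z j = 0" if "j \<in> {0..d}" "j \<noteq> t" for j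
  proof (rule ccontr)
    assume "Tmap d z j \<noteq> 0"
    then have "\<forall>k\<in>{1..Kdim d}. \<eta> j k = \<eta> t k" using key t that by simp
    then show False using dist that t by blast
  qed
  have "(\<Sum>j\<in>{0..d}. Tmap d z j) = (\<Sum>j\<in>{0..d}. if j = t then Tmap d z t else 0)"
    using oth by (intro sum.cong) auto
  then have "Tmap d z t = 1" using Tmap_sum[of d z] t by (simp add: sum.delta')
  then show ?thesis using oth t by (intro bexI[of _ t]) auto
qed

lemma concentrate:
  assumes "finite T" "\<forall>t\<in>T. 0 \<le> (w::nat\<Rightarrow>real) t" "sum w T = 1" "(\<Sum>t\<in>T. w t * (if P t then 1 else 0)) = 1"
  shows "\<forall>t\<in>T. w t \<noteq> 0 \<longrightarrow> P t"
proof -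
  have "(\<Sum>t\<in>T. w t * (if P t then 0 else 1)) = sum w T - (\<Sum>t\<in>T. w t * (if P t then 1 else 0))"
    by (simp add: sum_subtractf[symmetric]) (intro sum.cong, auto)
  then have "(\<Sum>t\<in>T. w t * (if P t then 0 else 1)) = 0" using assms by simp
  then have "\<forall>t\<in>T. w t * (if P t then 0 else 1) = 0"
    using assms by (subst (asm) sum_nonneg_eq_0_iff) auto
  then show ?thesis by (metis mult_cancel_left1 zero_neq_one)
qed

lemma psi_eq: "psi f1 f2 p1 p2 s1 s2 = (\<lambda>(i, k). f1 (p1 (s1 i)) * f2 (p2 (s2 k)))"
  by (auto simp: psi_def)

lemma psi_neg_eq: "(\<lambda>j. - psi f1 f2 p1 p2 s1 s2 j) = (\<lambda>(i, k). f1 (p1 (s1 i)) * (- f2 (p2 (s2 k))))"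
  by (auto simp: psi_def)




lemma stair_at_unit:
  assumes r1: "bij_betw \<rho>1 {0..d1} {0..d1}" and r2: "bij_betw \<rho>2 {0..d2} {0..d2}"
    and B1: "block_ok d1 p1 \<eta>1 x1 z1 \<delta>1" and B2: "block_ok d2 p2 \<eta>2 x2 z2 \<delta>2"
    and t1: "t1 \<in> {0..d1}" "\<forall>k\<in>{0..d1}. Tmap d1 z1 k = (if k = t1 then 1 else 0)"
    and t2: "t2 \<in> {0..d2}" "\<forall>k\<in>{0..d2}. Tmap d2 z2 k = (if k = t2 then 1 else 0)"
  shows "\<exists>\<pi>\<in>staircases d1 d2. stair_expr (psi f1 f2 p1 p2 \<rho>1 \<rho>2) \<pi> (Linv d1 \<rho>1 z1) (Linv d2 \<rho>2 z2)
           = f1 (p1 t1) * f2 (p2 t2)"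
proof -
  obtain \<pi> w where \<pi>: "\<pi> \<in> staircases d1 d2" and w0: "\<forall>t\<le>d1+d2. 0 \<le> w t"
    and w1: "(\<Sum>t\<le>d1+d2. w t) = 1"
    and st: "stair_expr (psi f1 f2 p1 p2 \<rho>1 \<rho>2) \<pi> (Linv d1 \<rho>1 z1) (Linv d2 \<rho>2 z2) =
       (\<Sum>t\<le>d1+d2. w t * (f1 (p1 (\<rho>1 (fst (jvec \<pi> t)))) * f2 (p2 (\<rho>2 (snd (jvec \<pi> t))))))"
    and l1: "\<forall>k\<in>{0..d1}. Tmap d1 z1 k = (\<Sum>t\<le>d1+d2. w t * (if \<rho>1 (fst (jvec \<pi> t)) = k then 1 else 0))"
    and l2: "\<forall>k\<in>{0..d2}. Tmap d2 z2 k = (\<Sum>t\<le>d1+d2. w t * (if \<rho>2 (snd (jvec \<pi> t)) = k then 1 else 0))"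
    using DEC[OF r1 r2 B1 B2, of f1 f2] by blast
  have h1: "(\<Sum>t\<le>d1+d2. w t * (if \<rho>1 (fst (jvec \<pi> t)) = t1 then 1 else 0)) = 1"
    using l1[rule_format, OF t1(1)] t1(2)[rule_format, OF t1(1)] by simp
  have h2: "(\<Sum>t\<le>d1+d2. w t * (if \<rho>2 (snd (jvec \<pi> t)) = t2 then 1 else 0)) = 1"
    using l2[rule_format, OF t2(1)] t2(2)[rule_format, OF t2(1)] by simp
  have c1: "\<forall>t\<in>{..d1+d2}. w t \<noteq> 0 \<longrightarrow> \<rho>1 (fst (jvec \<pi> t)) = t1"
    using h1 w0 w1 by (intro concentrate) auto
  have c2: "\<forall>t\<in>{..d1+d2}. w t \<noteq> 0 \<longrightarrow> \<rho>2 (snd (jvec \<pi> t)) = t2"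
    using h2 w0 w1 by (intro concentrate) auto
  have "(\<Sum>t\<le>d1+d2. w t * (f1 (p1 (\<rho>1 (fst (jvec \<pi> t)))) * f2 (p2 (\<rho>2 (snd (jvec \<pi> t))))))
      = (\<Sum>t\<le>d1+d2. w t * (f1 (p1 t1) * f2 (p2 t2)))"
    using c1 c2 by (intro sum.cong refl) (metis mult_zero_left)
  also have "\<dots> = f1 (p1 t1) * f2 (p2 t2)" using w1 by (simp add: sum_distrib_right[symmetric])
  finally have "stair_expr (psi f1 f2 p1 p2 \<rho>1 \<rho>2) \<pi> (Linv d1 \<rho>1 z1) (Linv d2 \<rho>2 z2) = f1 (p1 t1) * f2 (p2 t2)"
    using st by simp
  then show ?thesis using \<pi> by blast
qed

locale cor =
  fixes d1 d2 :: nat and p1 p2 :: "nat \<Rightarrow> real" and f1 f2 :: "real \<Rightarrow> real"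
    and \<sigma>1 \<sigma>2 \<tau>1 \<tau>2 :: "nat \<Rightarrow> nat" and \<eta>1 \<eta>2 :: "nat \<Rightarrow> nat \<Rightarrow> bool"
  assumes sb1: "bij_betw \<sigma>1 {0..d1} {0..d1}" and sb2: "bij_betw \<sigma>2 {0..d2} {0..d2}"
    and sf1: "\<forall>j<d1. f1 (p1 (\<sigma>1 j)) \<le> f1 (p1 (\<sigma>1 (Suc j)))"
    and sf2: "\<forall>j<d2. f2 (p2 (\<sigma>2 j)) \<le> f2 (p2 (\<sigma>2 (Suc j)))"
    and tb1: "bij_betw \<tau>1 {0..d1} {0..d1}" and tb2: "bij_betw \<tau>2 {0..d2} {0..d2}"
    and tf1: "\<forall>j<d1. f1 (p1 (\<tau>1 j)) \<le> f1 (p1 (\<tau>1 (Suc j)))"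
    and tf2: "\<forall>j<d2. f2 (p2 (\<tau>2 j)) \<ge> f2 (p2 (\<tau>2 (Suc j)))"
    and e1: "\<forall>t\<in>{0..d1}. \<forall>t'\<in>{0..d1}. t \<noteq> t' \<longrightarrow> (\<exists>k\<in>{1..Kdim d1}. \<eta>1 t k \<noteq> \<eta>1 t' k)"
    and e2: "\<forall>t\<in>{0..d2}. \<forall>t'\<in>{0..d2}. t \<noteq> t' \<longrightarrow> (\<exists>k\<in>{1..Kdim d2}. \<eta>2 t k \<noteq> \<eta>2 t' k)"
begin

abbreviation "Q \<equiv> relaxation d1 d2 p1 p2 f1 f2 \<sigma>1 \<sigma>2 \<tau>1 \<tau>2 \<eta>1 \<eta>2"

definition gp :: "nat \<Rightarrow> nat \<Rightarrow> pt" where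
  "gp t1 t2 = (p1 t1, p2 t2, vz t1, vz t2, f1 (p1 t1) * f2 (p2 t2), vd \<eta>1 d1 t1, vd \<eta>2 d2 t2)"

definition "GG = {gp t1 t2 | t1 t2. t1 \<le> d1 \<and> t2 \<le> d2}"

lemma inv_in: "bij_betw (\<rho>::nat\<Rightarrow>nat) {0..d} {0..d} \<Longrightarrow> t \<le> d \<Longrightarrow> inv_into {0..d} \<rho> t \<le> d \<and> \<rho> (inv_into {0..d} \<rho> t) = t"
proof -
  assume r: "bij_betw \<rho> {0..d} {0..d}" and t: "t \<le> d"
  have tt: "t \<in> {0..d}" using t by simp
  show ?thesis using bij_betw_inv_into_right[OF r tt] bij_betw_apply[OF bij_betw_inv_into[OF r] tt] by simp
qed

lemma gp_in: assumes t1: "t1 \<le> d1" and t2: "t2 \<le> d2" shows "gp t1 t2 \<in> Q"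
  unfolding gp_def relaxation_def mem_Collect_eq case_prod_conv
proof (intro conjI ballI block_vertex t1 t2)
  fix \<pi> assume \<pi>: "\<pi> \<in> staircases d1 d2"
  define s1 where "s1 = inv_into {0..d1} \<sigma>1 t1"
  define s2 where "s2 = inv_into {0..d2} \<sigma>2 t2"
  have s1: "s1 \<le> d1" "\<sigma>1 s1 = t1" using inv_in[OF sb1 t1] s1_def by auto
  have s2: "s2 \<le> d2" "\<sigma>2 s2 = t2" using inv_in[OF sb2 t2] s2_def by auto
  have sm: "supermod d1 d2 (psi f1 f2 p1 p2 \<sigma>1 \<sigma>2)"
    unfolding psi_eq by (rule prod_supermod[OF sf1 sf2])
  have "psi f1 f2 p1 p2 \<sigma>1 \<sigma>2 (s1, s2) \<le> stair_expr (psi f1 f2 p1 p2 \<sigma>1 \<sigma>2) \<pi> (Linv d1 \<sigma>1 (vz t1)) (Linv d2 \<sigma>2 (vz t2))"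
    by (rule stair_super[OF \<pi> s1(1) s2(1) _ _ sm]) (auto simp: Linv_vz[OF sb1 t1] Linv_vz[OF sb2 t2] s1_def s2_def)
  then show "f1 (p1 t1) * f2 (p2 t2) \<le> stair_expr (psi f1 f2 p1 p2 \<sigma>1 \<sigma>2) \<pi> (Linv d1 \<sigma>1 (vz t1)) (Linv d2 \<sigma>2 (vz t2))"
    using s1 s2 by (simp add: psi_def)
  define r1 where "r1 = inv_into {0..d1} \<tau>1 t1"
  define r2 where "r2 = inv_into {0..d2} \<tau>2 t2"
  have r1: "r1 \<le> d1" "\<tau>1 r1 = t1" using inv_in[OF tb1 t1] r1_def by auto
  have r2: "r2 \<le> d2" "\<tau>2 r2 = t2" using inv_in[OF tb2 t2] r2_def by auto
  have tf2': "\<forall>j<d2. - f2 (p2 (\<tau>2 j)) \<le> - f2 (p2 (\<tau>2 (Suc j)))" using tf2 by auto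
  have sm': "supermod d1 d2 (\<lambda>j. - psi f1 f2 p1 p2 \<tau>1 \<tau>2 j)"
    unfolding psi_neg_eq by (rule prod_supermod[OF tf1 tf2'])
  have "- psi f1 f2 p1 p2 \<tau>1 \<tau>2 (r1, r2) \<le> stair_expr (\<lambda>j. - psi f1 f2 p1 p2 \<tau>1 \<tau>2 j) \<pi> (Linv d1 \<tau>1 (vz t1)) (Linv d2 \<tau>2 (vz t2))"
    by (rule stair_super[OF \<pi> r1(1) r2(1) _ _ sm']) (auto simp: Linv_vz[OF tb1 t1] Linv_vz[OF tb2 t2] r1_def r2_def)
  then have "- psi f1 f2 p1 p2 \<tau>1 \<tau>2 (r1, r2) \<le> - stair_expr (psi f1 f2 p1 p2 \<tau>1 \<tau>2) \<pi> (Linv d1 \<tau>1 (vz t1)) (Linv d2 \<tau>2 (vz t2))"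
    by (simp only: stair_neg)
  moreover have "psi f1 f2 p1 p2 \<tau>1 \<tau>2 (r1, r2) = f1 (p1 t1) * f2 (p2 t2)" using r1 r2 by (simp add: psi_def)
  ultimately show "f1 (p1 t1) * f2 (p2 t2) \<ge> stair_expr (psi f1 f2 p1 p2 \<tau>1 \<tau>2) \<pi> (Linv d1 \<tau>1 (vz t1)) (Linv d2 \<tau>2 (vz t2))"
    by linarith
qed

lemma gp_bin: "binary_ok d1 d2 (gp t1 t2)"
  by (simp add: binary_ok_def gp_def vd_def)

lemma chullQ: "chull GG \<subseteq> Q"
proof (rule chull_sub)
  show "GG \<subseteq> Q" using gp_in by (auto simp: GG_def)
qed (rule relax_pcomb)

lemma rep:
  assumes r1: "bij_betw \<rho>1 {0..d1} {0..d1}" and r2: "bij_betw \<rho>2 {0..d2} {0..d2}"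
    and B1: "block_ok d1 p1 \<eta>1 x1 z1 \<delta>1" and B2: "block_ok d2 p2 \<eta>2 x2 z2 \<delta>2"
  shows "\<exists>\<pi>\<in>staircases d1 d2.
     (x1, x2, z1, z2, stair_expr (psi f1 f2 p1 p2 \<rho>1 \<rho>2) \<pi> (Linv d1 \<rho>1 z1) (Linv d2 \<rho>2 z2), \<delta>1, \<delta>2) \<in> chull GG"
proof -
  obtain \<pi> w where \<pi>: "\<pi> \<in> staircases d1 d2" and w0: "\<forall>t\<le>d1+d2. 0 \<le> w t"
    and w1: "(\<Sum>t\<le>d1+d2. w t) = 1"
    and st: "stair_expr (psi f1 f2 p1 p2 \<rho>1 \<rho>2) \<pi> (Linv d1 \<rho>1 z1) (Linv d2 \<rho>2 z2) =
       (\<Sum>t\<le>d1+d2. w t * (f1 (p1 (\<rho>1 (fst (jvec \<pi> t)))) * f2 (p2 (\<rho>2 (snd (jvec \<pi> t))))))"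
    and l1: "\<forall>k\<in>{0..d1}. Tmap d1 z1 k = (\<Sum>t\<le>d1+d2. w t * (if \<rho>1 (fst (jvec \<pi> t)) = k then 1 else 0))"
    and l2: "\<forall>k\<in>{0..d2}. Tmap d2 z2 k = (\<Sum>t\<le>d1+d2. w t * (if \<rho>2 (snd (jvec \<pi> t)) = k then 1 else 0))"
    and rg: "\<forall>t\<le>d1+d2. \<rho>1 (fst (jvec \<pi> t)) \<in> {0..d1} \<and> \<rho>2 (snd (jvec \<pi> t)) \<in> {0..d2}"
    using DEC[OF r1 r2 B1 B2, of f1 f2] by blast
  define s1 where "s1 t = \<rho>1 (fst (jvec \<pi> t))" for t
  define s2 where "s2 t = \<rho>2 (snd (jvec \<pi> t))" for t
  have rg1: "\<forall>t\<in>{..d1+d2}. s1 t \<in> {0..d1}" and rg2: "\<forall>t\<in>{..d1+d2}. s2 t \<in> {0..d2}"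
    using rg by (auto simp: s1_def s2_def)
  note R1 = block_rep[OF B1 _ w1 rg1 l1[folded s1_def]]
  note R2 = block_rep[OF B2 _ w1 rg2 l2[folded s2_def]]
  have eq: "(x1, x2, z1, z2, stair_expr (psi f1 f2 p1 p2 \<rho>1 \<rho>2) \<pi> (Linv d1 \<rho>1 z1) (Linv d2 \<rho>2 z2), \<delta>1, \<delta>2)
      = psum {..d1+d2} w (\<lambda>t. gp (s1 t) (s2 t))"
    unfolding st psum_def gp_def X1_def X2_def Z1_def Z2_def MU_def D1_def D2_def s1_def[symmetric] s2_def[symmetric]
    using R1 R2 by simp
  have "psum {..d1+d2} w (\<lambda>t. gp (s1 t) (s2 t)) \<in> chull GG"
    using rg1 rg2 w0 w1 by (intro psum_chull) (auto simp: GG_def)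
  then show ?thesis using \<pi> unfolding eq[symmetric] by blast
qed

lemma vertex_bin:
  assumes v: "vertex_of v Q" shows "binary_ok d1 d2 v"
proof -
  have vQ: "v \<in> Q" using v unfolding vertex_of_def by blast
  obtain x1 x2 z1 z2 \<mu> \<delta>1 \<delta>2 where vv: "v = (x1, x2, z1, z2, \<mu>, \<delta>1, \<delta>2)" by (cases v) auto
  have B1: "block_ok d1 p1 \<eta>1 x1 z1 \<delta>1" and B2: "block_ok d2 p2 \<eta>2 x2 z2 \<delta>2"
    and ST: "\<forall>\<pi>\<in>staircases d1 d2. \<mu> \<le> stair_expr (psi f1 f2 p1 p2 \<sigma>1 \<sigma>2) \<pi> (Linv d1 \<sigma>1 z1) (Linv d2 \<sigma>2 z2) \<and>
          \<mu> \<ge> stair_expr (psi f1 f2 p1 p2 \<tau>1 \<tau>2) \<pi> (Linv d1 \<tau>1 z1) (Linv d2 \<tau>2 z2)"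
    using vQ unfolding vv relaxation_def by simp_all
  obtain \<pi>h where \<pi>h: "\<pi>h \<in> staircases d1 d2" and hi: "(x1, x2, z1, z2, stair_expr (psi f1 f2 p1 p2 \<sigma>1 \<sigma>2) \<pi>h (Linv d1 \<sigma>1 z1) (Linv d2 \<sigma>2 z2), \<delta>1, \<delta>2) \<in> chull GG"
    using rep[OF sb1 sb2 B1 B2] by blast
  obtain \<pi>l where \<pi>l: "\<pi>l \<in> staircases d1 d2" and lo: "(x1, x2, z1, z2, stair_expr (psi f1 f2 p1 p2 \<tau>1 \<tau>2) \<pi>l (Linv d1 \<tau>1 z1) (Linv d2 \<tau>2 z2), \<delta>1, \<delta>2) \<in> chull GG"
    using rep[OF tb1 tb2 B1 B2] by blast
  define mh where "mh = stair_expr (psi f1 f2 p1 p2 \<sigma>1 \<sigma>2) \<pi>h (Linv d1 \<sigma>1 z1) (Linv d2 \<sigma>2 z2)"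
  define ml where "ml = stair_expr (psi f1 f2 p1 p2 \<tau>1 \<tau>2) \<pi>l (Linv d1 \<tau>1 z1) (Linv d2 \<tau>2 z2)"
  have mh: "\<mu> \<le> mh" using ST \<pi>h mh_def by blast
  have ml: "ml \<le> \<mu>" using ST \<pi>l ml_def by blast
  have "v \<in> chull GG"
  proof (cases "mh = ml")
    case True
    then have "\<mu> = mh" using mh ml by simp
    then show ?thesis using hi unfolding vv mh_def by simp
  next
    case False
    define \<theta> where "\<theta> = (\<mu> - ml) / (mh - ml)"
    have pos: "mh - ml > 0" using False mh ml by simp
    have th: "0 \<le> \<theta>" "\<theta> \<le> 1" using mh ml pos by (auto simp: \<theta>_def field_simps)
    have mu: "(1 - \<theta>) * ml + \<theta> * mh = \<mu>"
    proof -
      have "(1 - \<theta>) * ml + \<theta> * mh = ml + \<theta> * (mh - ml)" by (simp add: algebra_simps)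
      also have "\<dots> = \<mu>" using pos by (simp add: \<theta>_def)
      finally show ?thesis .
    qed
    have fc: "fcomb \<theta> f f = f" for f by (rule ext) (simp add: fcomb_def algebra_simps)
    have "pcomb \<theta> (x1, x2, z1, z2, ml, \<delta>1, \<delta>2) (x1, x2, z1, z2, mh, \<delta>1, \<delta>2) = v"
      unfolding vv pcomb_def using mu by (simp add: fc algebra_simps)
    then show ?thesis using chull.step[OF lo[folded ml_def] hi[folded mh_def] th] by simp
  qed
  then have "v \<in> GG" using vertex_chull[OF _ v chullQ] by blast
  then show ?thesis using gp_bin by (auto simp: GG_def)
qed

lemma proj_eq:
  "proj_xmu ` {w \<in> Q. binary_ok d1 d2 w} =
     {(x1, x2, \<mu>). x1 \<in> p1 ` {0..d1} \<and> x2 \<in> p2 ` {0..d2} \<and> \<mu> = f1 x1 * f2 x2}"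
proof (intro equalityI subsetI)
  fix y assume "y \<in> proj_xmu ` {w \<in> Q. binary_ok d1 d2 w}"
  then obtain w where wQ: "w \<in> Q" and wb: "binary_ok d1 d2 w" and y: "y = proj_xmu w" by blast
  obtain x1 x2 z1 z2 \<mu> \<delta>1 \<delta>2 where vv: "w = (x1, x2, z1, z2, \<mu>, \<delta>1, \<delta>2)" by (cases w) auto
  have B1: "block_ok d1 p1 \<eta>1 x1 z1 \<delta>1" and B2: "block_ok d2 p2 \<eta>2 x2 z2 \<delta>2"
    and ST: "\<forall>\<pi>\<in>staircases d1 d2. \<mu> \<le> stair_expr (psi f1 f2 p1 p2 \<sigma>1 \<sigma>2) \<pi> (Linv d1 \<sigma>1 z1) (Linv d2 \<sigma>2 z2) \<and>
          \<mu> \<ge> stair_expr (psi f1 f2 p1 p2 \<tau>1 \<tau>2) \<pi> (Linv d1 \<tau>1 z1) (Linv d2 \<tau>2 z2)"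
    using wQ unfolding vv relaxation_def by simp_all
  have bin1: "\<forall>k\<in>{1..Kdim d1}. \<delta>1 k \<in> {0, 1}" and bin2: "\<forall>k\<in>{1..Kdim d2}. \<delta>2 k \<in> {0, 1}"
    using wb unfolding vv binary_ok_def by simp_all
  obtain t1 where t1: "t1 \<in> {0..d1}" "\<forall>k\<in>{0..d1}. Tmap d1 z1 k = (if k = t1 then 1 else 0)"
    using unit_lam[OF B1 bin1 e1] by blast
  obtain t2 where t2: "t2 \<in> {0..d2}" "\<forall>k\<in>{0..d2}. Tmap d2 z2 k = (if k = t2 then 1 else 0)"
    using unit_lam[OF B2 bin2 e2] by blast
  have x1: "x1 = p1 t1"
    using block_rep(2)[OF B1, of "{0::nat}" "\<lambda>_. 1" "\<lambda>_. t1"] t1 by auto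
  have x2: "x2 = p2 t2"
    using block_rep(2)[OF B2, of "{0::nat}" "\<lambda>_. 1" "\<lambda>_. t2"] t2 by auto
  obtain \<pi>h where "\<pi>h \<in> staircases d1 d2"
      "stair_expr (psi f1 f2 p1 p2 \<sigma>1 \<sigma>2) \<pi>h (Linv d1 \<sigma>1 z1) (Linv d2 \<sigma>2 z2) = f1 (p1 t1) * f2 (p2 t2)"
    using stair_at_unit[OF sb1 sb2 B1 B2 t1 t2] by blast
  then have le: "\<mu> \<le> f1 (p1 t1) * f2 (p2 t2)" using ST by metis
  obtain \<pi>l where "\<pi>l \<in> staircases d1 d2"
      "stair_expr (psi f1 f2 p1 p2 \<tau>1 \<tau>2) \<pi>l (Linv d1 \<tau>1 z1) (Linv d2 \<tau>2 z2) = f1 (p1 t1) * f2 (p2 t2)"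
    using stair_at_unit[OF tb1 tb2 B1 B2 t1 t2] by blast
  then have ge: "\<mu> \<ge> f1 (p1 t1) * f2 (p2 t2)" using ST by metis
  show "y \<in> {(x1, x2, \<mu>). x1 \<in> p1 ` {0..d1} \<and> x2 \<in> p2 ` {0..d2} \<and> \<mu> = f1 x1 * f2 x2}"
    using y vv x1 x2 le ge t1(1) t2(1) by (auto simp: proj_xmu_def)
next
  fix y assume "y \<in> {(x1, x2, \<mu>). x1 \<in> p1 ` {0..d1} \<and> x2 \<in> p2 ` {0..d2} \<and> \<mu> = f1 x1 * f2 x2}"
  then obtain t1 t2 where t: "t1 \<le> d1" "t2 \<le> d2" and y: "y = (p1 t1, p2 t2, f1 (p1 t1) * f2 (p2 t2))"
    by auto
  have "proj_xmu (gp t1 t2) = y" using y by (simp add: gp_def proj_xmu_def)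
  moreover have "gp t1 t2 \<in> {w \<in> Q. binary_ok d1 d2 w}" using gp_in[OF t] gp_bin by simp
  ultimately show "y \<in> proj_xmu ` {w \<in> Q. binary_ok d1 d2 w}" by blast
qed

lemma main:
  "ideal_MIP_formulation Q (binary_ok d1 d2) proj_xmu
     {(x1, x2, \<mu>). x1 \<in> p1 ` {0..d1} \<and> x2 \<in> p2 ` {0..d2} \<and> \<mu> = f1 x1 * f2 x2}"
  unfolding ideal_MIP_formulation_def using proj_eq vertex_bin by blast

end


theorem corollary1:
  fixes d1 d2 :: nat and p1 p2 :: "nat \<Rightarrow> real" and f1 f2 :: "real \<Rightarrow> real"
    and \<sigma>1 \<sigma>2 \<tau>1 \<tau>2 :: "nat \<Rightarrow> nat" and \<eta>1 \<eta>2 :: "nat \<Rightarrow> nat \<Rightarrow> bool"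
  assumes "d1 \<ge> 1" and "d2 \<ge> 1"
    and "\<forall>j<d1. p1 j < p1 (Suc j)" and "\<forall>j<d2. p2 j < p2 (Suc j)"
    and "bij_betw \<sigma>1 {0..d1} {0..d1}" and "bij_betw \<sigma>2 {0..d2} {0..d2}"
    and "\<forall>j<d1. f1 (p1 (\<sigma>1 j)) \<le> f1 (p1 (\<sigma>1 (Suc j)))"
    and "\<forall>j<d2. f2 (p2 (\<sigma>2 j)) \<le> f2 (p2 (\<sigma>2 (Suc j)))"
    and "bij_betw \<tau>1 {0..d1} {0..d1}" and "bij_betw \<tau>2 {0..d2} {0..d2}"
    and "\<forall>j<d1. f1 (p1 (\<tau>1 j)) \<le> f1 (p1 (\<tau>1 (Suc j)))"
    and "\<forall>j<d2. f2 (p2 (\<tau>2 j)) \<ge> f2 (p2 (\<tau>2 (Suc j)))"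
    and "\<forall>t\<in>{0..d1}. \<forall>t'\<in>{0..d1}. t \<noteq> t' \<longrightarrow> (\<exists>k\<in>{1..Kdim d1}. \<eta>1 t k \<noteq> \<eta>1 t' k)"
    and "\<forall>t\<in>{0..d2}. \<forall>t'\<in>{0..d2}. t \<noteq> t' \<longrightarrow> (\<exists>k\<in>{1..Kdim d2}. \<eta>2 t k \<noteq> \<eta>2 t' k)"
  shows "ideal_MIP_formulation
           (relaxation d1 d2 p1 p2 f1 f2 \<sigma>1 \<sigma>2 \<tau>1 \<tau>2 \<eta>1 \<eta>2)
           (binary_ok d1 d2) proj_xmu
           {(x1, x2, \<mu>). x1 \<in> p1 ` {0..d1} \<and> x2 \<in> p2 ` {0..d2} \<and> \<mu> = f1 x1 * f2 x2}"
proof -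
  interpret cor d1 d2 p1 p2 f1 f2 \<sigma>1 \<sigma>2 \<tau>1 \<tau>2 \<eta>1 \<eta>2
    using assms(5-14) unfolding cor_def by blast
  show ?thesis by (rule main)
qed

end
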